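(* Let $k\geq 5$ be a natural number. If $$n \geq \frac{2}{\ln 2} k^2 + \left(2 - \frac{3}{\ln 2}\right) k + \frac{1}{\ln 2} \geq \frac{2^{\frac{1}{k-1}}(2k)-1}{2^{\frac{1}{k-1}}-1},$$ then $$t(K(n,k)) = \frac{n}{k} -1.$$ Moreover, any subset of vertices $S$ such that $t(K(n,k))=\frac{|S|}{c(K(n,k)\setminus S)}$ must be the complement of a maximum independent set in $K(n,k)$.
   Context: For integers $n\geq 2k+1$, the Kneser graph $K(n,k)$ has as vertices the $k$-element subsets of $[n]=\{1,\dots,n\}$, two vertices $A,B$ being adjacent iff $A\cap B=\emptyset$. For a connected graph $G$, a vertex cut is a set $S$ of vertices whose removal disconnects $G$; $c(G\setminus S)$ denotes the number of connected components of the graph obtained by deleting $S$. The toughness of $G$ is $t(G)=\min_S \frac{|S|}{c(G\setminus S)}$, the minimum over all vertex cuts $S$ of $G$. *)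

theory Defs
  imports Complex_Main
begin

definition kneser_vertices :: "nat \<Rightarrow> nat \<Rightarrow> nat set set" where
  "kneser_vertices n k = {A. A \<subseteq> {1..n} \<and> card A = k}"

definition kneser_adj :: "nat set \<Rightarrow> nat set \<Rightarrow> bool" where
  "kneser_adj A B \<longleftrightarrow> A \<inter> B = {}"

definition reach :: "'a set \<Rightarrow> ('a \<Rightarrow> 'a \<Rightarrow> bool) \<Rightarrow> 'a \<Rightarrow> 'a \<Rightarrow> bool" where
  "reach W E = (\<lambda>a b. a \<in> W \<and> b \<in> W \<and> E a b)\<^sup>*\<^sup>*"

definition components :: "'a set \<Rightarrow> ('a \<Rightarrow> 'a \<Rightarrow> bool) \<Rightarrow> 'a set set" where
  "components W E = {{y \<in> W. reach W E x y} | x. x \<in> W}"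

definition num_components :: "'a set \<Rightarrow> ('a \<Rightarrow> 'a \<Rightarrow> bool) \<Rightarrow> nat" where
  "num_components W E = card (components W E)"

definition vertex_cut :: "'a set \<Rightarrow> ('a \<Rightarrow> 'a \<Rightarrow> bool) \<Rightarrow> 'a set \<Rightarrow> bool" where
  "vertex_cut V E S \<longleftrightarrow> S \<subseteq> V \<and> num_components (V - S) E \<ge> 2"

definition toughness :: "'a set \<Rightarrow> ('a \<Rightarrow> 'a \<Rightarrow> bool) \<Rightarrow> real" where
  "toughness V E = Min {real (card S) / real (num_components (V - S) E) | S. vertex_cut V E S}"

definition independent_set :: "'a set \<Rightarrow> ('a \<Rightarrow> 'a \<Rightarrow> bool) \<Rightarrow> 'a set \<Rightarrow> bool" where
  "independent_set V E I \<longleftrightarrow> I \<subseteq> V \<and> (\<forall>x\<in>I. \<forall>y\<in>I. \<not> E x y)"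

definition maximum_independent_set :: "'a set \<Rightarrow> ('a \<Rightarrow> 'a \<Rightarrow> bool) \<Rightarrow> 'a set \<Rightarrow> bool" where
  "maximum_independent_set V E I \<longleftrightarrow> independent_set V E I \<and>
     (\<forall>J. independent_set V E J \<longrightarrow> card J \<le> card I)"

end

theory Submission
  imports Defs "HOL-Combinatorics.Multiset_Permutations"
begin

definition arc :: "nat \<Rightarrow> 'a list \<Rightarrow> nat \<Rightarrow> 'a set" where
  "arc k xs i = (\<lambda>t. xs ! ((i + t) mod length xs)) ` {..<k}"

definition pos :: "nat \<Rightarrow> nat \<Rightarrow> nat \<Rightarrow> nat set" where
  "pos m k i = (\<lambda>t. (i + t) mod m) ` {..<k}"

lemma arc_pos: "arc k xs i = (\<lambda>p. xs ! p) ` pos (length xs) k i"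
  unfolding arc_def pos_def by (simp add: image_image)

lemma arc_disj:
  assumes "distinct xs" "pos (length xs) k i \<inter> pos (length xs) k j = {}" "length xs > 0"
  shows "arc k xs i \<inter> arc k xs j = {}"
proof -
  have "\<forall>p\<in>pos (length xs) k i. p < length xs" "\<forall>p\<in>pos (length xs) k j. p < length xs"
    using assms(3) by (auto simp: pos_def)
  then show ?thesis using assms(1,2) unfolding arc_pos
    by (auto simp: distinct_conv_nth) (metis disjoint_iff)
qed

lemma arc_rotate:
  assumes "length xs > 0"
  shows "arc k (rotate r xs) j = arc k xs ((j + r) mod length xs)"
proof -
  have "rotate r xs ! ((j + t) mod length xs) = xs ! (((j + r) mod length xs + t) mod length xs)" for t
    using assms by (simp add: nth_rotate mod_add_left_eq mod_add_right_eq add.commute add.left_commute)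
  then show ?thesis unfolding arc_def by simp
qed

lemma arc0: "k \<le> length xs \<Longrightarrow> arc k xs 0 = set (take k xs)"
  unfolding arc_def using nth_image[of k xs] by (auto simp: atLeast0LessThan)

lemma perms_take_count:
  assumes "finite G" "X \<subseteq> G" "card X = k"
  shows "card {xs \<in> permutations_of_set G. set (take k xs) = X} = fact k * fact (card G - k)"
proof -
  let ?P = "permutations_of_set"
  have fX: "finite X" using assms finite_subset by blast
  have eq: "{xs \<in> ?P G. set (take k xs) = X} = (\<lambda>(ys,zs). ys @ zs) ` (?P X \<times> ?P (G - X))"
  proof
    show "{xs \<in> ?P G. set (take k xs) = X} \<subseteq> (\<lambda>(ys,zs). ys @ zs) ` (?P X \<times> ?P (G - X))"
    proof
      fix xs assume xs: "xs \<in> {xs \<in> ?P G. set (take k xs) = X}"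
      then have d: "distinct xs" and s: "set xs = G" and t: "set (take k xs) = X"
        by (auto simp: permutations_of_set_def)
      have disj: "set (take k xs) \<inter> set (drop k xs) = {}"
        using d set_take_disj_set_drop_if_distinct by blast
      have u: "set (take k xs) \<union> set (drop k xs) = G"
        using s by (metis append_take_drop_id set_append)
      have "take k xs \<in> ?P X" using d t by (auto simp: permutations_of_set_def)
      moreover have "drop k xs \<in> ?P (G - X)"
        using d t disj u by (auto simp: permutations_of_set_def)
      ultimately show "xs \<in> (\<lambda>(ys,zs). ys @ zs) ` (?P X \<times> ?P (G - X))"
        by (intro image_eqI[of _ _ "(take k xs, drop k xs)"]) auto
    qed
  next
    show "(\<lambda>(ys,zs). ys @ zs) ` (?P X \<times> ?P (G - X)) \<subseteq> {xs \<in> ?P G. set (take k xs) = X}"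
    proof
      fix xs assume "xs \<in> (\<lambda>(ys,zs). ys @ zs) ` (?P X \<times> ?P (G - X))"
      then obtain ys zs where xs: "xs = ys @ zs" and ys: "ys \<in> ?P X" and zs: "zs \<in> ?P (G - X)"
        by auto
      have ly: "length ys = k" using ys assms(3) distinct_card by (force simp: permutations_of_set_def)
      show "xs \<in> {xs \<in> ?P G. set (take k xs) = X}"
        using ys zs assms(2) ly unfolding xs by (auto simp: permutations_of_set_def)
    qed
  qed
  have inj: "inj_on (\<lambda>(ys,zs). ys @ zs) (?P X \<times> ?P (G - X))"
  proof (rule inj_onI, clarify)
    fix ys zs ys' zs' assume a: "ys \<in> ?P X" "zs \<in> ?P (G - X)" "ys' \<in> ?P X" "zs' \<in> ?P (G - X)"
      and e: "ys @ zs = ys' @ zs'"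
    have "length ys = length ys'" using a length_finite_permutations_of_set by metis
    then show "ys = ys' \<and> zs = zs'" using e by simp
  qed
  have cGX: "card (G - X) = card G - k" using assms fX by (simp add: card_Diff_subset)
  show ?thesis unfolding eq card_image[OF inj] card_cartesian_product
    using assms fX cGX by (simp add: finite_subset)
qed

lemma perms_arc_count:
  assumes "finite G" "X \<subseteq> G" "card X = k" "k \<le> card G" "i < card G"
  shows "card {xs \<in> permutations_of_set G. arc k xs i = X} = fact k * fact (card G - k)"
proof -
  let ?P = "permutations_of_set G"
  let ?m = "card G"
  have m0: "?m > 0" using assms(5) by simp
  have len: "\<And>xs. xs \<in> ?P \<Longrightarrow> length xs = ?m" using length_finite_permutations_of_set by blast
  have b: "bij_betw (rotate i) {xs \<in> ?P. arc k xs i = X} {xs \<in> ?P. set (take k xs) = X}"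
  proof (rule bij_betw_byWitness[where f'="rotate (?m - i)"])
    show "\<forall>a\<in>{xs \<in> ?P. arc k xs i = X}. rotate (?m - i) (rotate i a) = a"
      using len assms(5) by (auto simp: rotate_rotate)
    show "\<forall>a'\<in>{xs \<in> ?P. set (take k xs) = X}. rotate i (rotate (?m - i) a') = a'"
      using len assms(5) by (auto simp: rotate_rotate)
    show "rotate i ` {xs \<in> ?P. arc k xs i = X} \<subseteq> {xs \<in> ?P. set (take k xs) = X}"
    proof (rule image_subsetI)
      fix xs assume "xs \<in> {xs \<in> ?P. arc k xs i = X}"
      then have xs: "xs \<in> ?P" "arc k xs i = X" by auto
      have "arc k (rotate i xs) 0 = arc k xs i" using arc_rotate[of xs k i 0] len[OF xs(1)] m0 assms(5) by simp
      then have "set (take k (rotate i xs)) = X" using arc0[of k "rotate i xs"] len[OF xs(1)] assms(4) xs(2) by simp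
      moreover have "rotate i xs \<in> ?P" using xs(1) by (auto simp: permutations_of_set_def)
      ultimately show "rotate i xs \<in> {xs \<in> ?P. set (take k xs) = X}" by simp
    qed
    show "rotate (?m - i) ` {xs \<in> ?P. set (take k xs) = X} \<subseteq> {xs \<in> ?P. arc k xs i = X}"
    proof (rule image_subsetI)
      fix xs assume "xs \<in> {xs \<in> ?P. set (take k xs) = X}"
      then have xs: "xs \<in> ?P" "set (take k xs) = X" by auto
      have "arc k (rotate (?m - i) xs) i = arc k xs ((i + (?m - i)) mod ?m)"
        using arc_rotate[of xs k "?m - i" i] len[OF xs(1)] m0 by simp
      also have "\<dots> = arc k xs 0" using assms(5) by simp
      also have "\<dots> = X" using arc0[of k xs] len[OF xs(1)] assms(4) xs(2) by simp
      finally have "arc k (rotate (?m - i) xs) i = X" .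
      moreover have "rotate (?m - i) xs \<in> ?P" using xs(1) by (auto simp: permutations_of_set_def)
      ultimately show "rotate (?m - i) xs \<in> {xs \<in> ?P. arc k xs i = X}" by simp
    qed
  qed
  show ?thesis using bij_betw_same_card[OF b] perms_take_count[OF assms(1-3)] by simp
qed

lemma mod_wrap: "i < m \<Longrightarrow> t \<le> m \<Longrightarrow> (i + t) mod (m::nat) = (if i + t < m then i + t else i + t - m)"
proof -
  assume a: "i < m" "t \<le> m"
  show ?thesis
  proof (cases "i + t < m")
    case True then show ?thesis by simp
  next
    case False
    then have "i + t = (i + t - m) + m" by simp
    moreover have "i + t - m < m" using a by simp
    ultimately show ?thesis using False by (metis mod_add_self2 mod_less)
  qed
qed

lemma pos_disjI:
  assumes "\<And>t t'. t < k \<Longrightarrow> t' < k \<Longrightarrow> (i + t) mod m \<noteq> (j + t') mod m"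
  shows "pos m k i \<inter> pos m k j = {}"
  using assms unfolding pos_def by auto

lemma list_bound0:
  assumes d: "distinct xs" and l: "length xs = m" and mk: "2*k \<le> m" and k1: "k \<ge> 1"
    and F: "\<forall>X\<in>F. \<forall>Y\<in>F. X \<inter> Y \<noteq> {}" and a0: "arc k xs 0 \<in> F"
  shows "card {j. j < m \<and> arc k xs j \<in> F} \<le> k"
proof -
  let ?I = "{j. j < m \<and> arc k xs j \<in> F}"
  have m0: "m > 0" using mk k1 by simp
  have out: "j < k \<or> m - k < j" if "j \<in> ?I" for j
  proof (rule ccontr)
    assume "\<not> (j < k \<or> m - k < j)"
    then have j: "k \<le> j" "j \<le> m - k" by auto
    have "pos m k j \<inter> pos m k 0 = {}"
    proof (rule pos_disjI)
      fix t t' assume "t < k" "t' < k"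
      then show "(j + t) mod m \<noteq> (0 + t') mod m" using j mk by simp
    qed
    then have "arc k xs j \<inter> arc k xs 0 = {}" using arc_disj[OF d] l m0 by simp
    then show False using F a0 that by auto
  qed
  have pair: "arc k xs j \<inter> arc k xs (m - k + j) = {}" if "1 \<le> j" "j < k" for j
  proof -
    have "pos m k j \<inter> pos m k (m - k + j) = {}"
    proof (rule pos_disjI)
      fix t t' assume tt: "t < k" "t' < k"
      have e1: "(j + t) mod m = j + t" using tt that mk by simp
      have e2: "(m - k + j + t') mod m = (if m - k + j + t' < m then m - k + j + t' else m - k + j + t' - m)"
        using mod_wrap[of "m - k + j" m t'] that tt mk by simp
      show "(j + t) mod m \<noteq> (m - k + j + t') mod m"
        unfolding e1 e2 using tt that mk by auto
    qed
    then show ?thesis using arc_disj[OF d] l m0 by simp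
  qed
  define h where "h j = (if j < k then j else j + k - m)" for j
  have inj: "inj_on h ?I"
  proof (rule inj_onI)
    fix a b assume a: "a \<in> ?I" and b: "b \<in> ?I" and e: "h a = h b"
    show "a = b"
    proof (rule ccontr)
      assume ne: "a \<noteq> b"
      have oa: "a < k \<or> m - k < a" using out a by blast
      have ob: "b < k \<or> m - k < b" using out b by blast
      have am: "a < m" "b < m" using a b by auto
      { fix x y assume x: "x \<in> ?I" "x < k" and y: "y \<in> ?I" "m - k < y" "y < m" and hxy: "x = y + k - m"
        have "1 \<le> x" using y hxy mk by linarith
        moreover have "y = m - k + x" using y hxy mk by linarith
        ultimately have "arc k xs x \<inter> arc k xs y = {}" using pair[of x] x by simp
        then have False using F x y by auto }
      note * = this
      show False
      proof (cases "a < k")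
        case True
        then show ?thesis
        proof (cases "b < k")
          case True then show ?thesis using \<open>a < k\<close> e ne by (simp add: h_def)
        next
          case False
          then have "m - k < b" using ob by auto
          moreover have "a = b + k - m" using e \<open>a < k\<close> False by (simp add: h_def)
          ultimately show ?thesis using *[of a b] a b True am by blast
        qed
      next
        case False
        then have ma: "m - k < a" using oa by auto
        show ?thesis
        proof (cases "b < k")
          case True
          moreover have "b = a + k - m" using e \<open>\<not> a < k\<close> True by (simp add: h_def)
          ultimately show ?thesis using *[of b a] a b ma am by blast
        next
          case False
          then have "m - k < b" using ob by auto
          then show ?thesis using e ne False \<open>\<not> a < k\<close> ma am by (simp add: h_def)
        qed
      qed
    qed
  qed
  have "h ` ?I \<subseteq> {..<k}"
  proof
    fix y assume "y \<in> h ` ?I"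
    then obtain j where j: "j \<in> ?I" "y = h j" by auto
    then show "y \<in> {..<k}" using out[OF j(1)] mk by (auto simp: h_def)
  qed
  then have "card (h ` ?I) \<le> k" by (metis card_lessThan card_mono finite_lessThan)
  then show ?thesis using card_image[OF inj] by simp
qed

lemma list_bound:
  assumes d: "distinct xs" and l: "length xs = m" and mk: "2*k \<le> m" and k1: "k \<ge> 1"
    and F: "\<forall>X\<in>F. \<forall>Y\<in>F. X \<inter> Y \<noteq> {}"
  shows "card {j. j < m \<and> arc k xs j \<in> F} \<le> k"
proof (cases "{j. j < m \<and> arc k xs j \<in> F} = {}")
  case True then show ?thesis by (metis card.empty le0)
next
  case False
  then obtain i0 where i0: "i0 < m" "arc k xs i0 \<in> F" by auto
  have m0: "m > 0" using i0 by simp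
  let ?ys = "rotate i0 xs"
  have a: "arc k ?ys j = arc k xs ((j + i0) mod m)" for j
    using arc_rotate[of xs k i0 j] l m0 by simp
  have "{j. j < m \<and> arc k xs j \<in> F} \<subseteq> (\<lambda>j. (j + i0) mod m) ` {j. j < m \<and> arc k ?ys j \<in> F}"
  proof
    fix i assume i: "i \<in> {j. j < m \<and> arc k xs j \<in> F}"
    let ?j = "(i + (m - i0)) mod m"
    have e: "(?j + i0) mod m = i" using i i0 by (simp add: mod_add_left_eq)
    show "i \<in> (\<lambda>j. (j + i0) mod m) ` {j. j < m \<and> arc k ?ys j \<in> F}"
      by (rule image_eqI[of _ _ ?j]) (use e i m0 a in auto)
  qed
  moreover have fin: "finite {j. j < m \<and> arc k ?ys j \<in> F}" by simp
  ultimately have "card {j. j < m \<and> arc k xs j \<in> F} \<le> card {j. j < m \<and> arc k ?ys j \<in> F}"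
    using card_image_le[OF fin] card_mono[OF finite_imageI[OF fin]] le_trans by blast
  also have "\<dots> \<le> k"
    by (rule list_bound0) (use d l mk k1 F a i0 in auto)
  finally show ?thesis .
qed

lemma card_filter_sum: "finite A \<Longrightarrow> card {x\<in>A. P x} = (\<Sum>x\<in>A. if P x then 1 else (0::nat))"
  by (simp add: sum.If_cases Int_def)

lemma ekr_sum:
  assumes G: "finite G" "card G = m" and km: "k \<le> m" and m0: "0 < m"
    and F: "F \<subseteq> {X. X \<subseteq> G \<and> card X = k}"
  shows "(\<Sum>xs\<in>permutations_of_set G. card {j. j < m \<and> arc k xs j \<in> F})
           = card F * m * (fact k * fact (m - k))"
proof -
  let ?P = "permutations_of_set G"
  have "F \<subseteq> Pow G" using F by auto
  then have fF: "finite F" using G(1) finite_subset by blast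
  have "(\<Sum>xs\<in>?P. card {j. j < m \<and> arc k xs j \<in> F})
      = (\<Sum>xs\<in>?P. \<Sum>j\<in>{..<m}. if arc k xs j \<in> F then 1 else (0::nat))"
  proof (rule sum.cong[OF refl])
    fix xs show "card {j. j < m \<and> arc k xs j \<in> F} = (\<Sum>j\<in>{..<m}. if arc k xs j \<in> F then 1 else 0)"
      using card_filter_sum[of "{..<m}" "\<lambda>j. arc k xs j \<in> F"] by (simp add: lessThan_def)
  qed
  also have "\<dots> = (\<Sum>j\<in>{..<m}. \<Sum>xs\<in>?P. if arc k xs j \<in> F then 1 else (0::nat))"
    by (rule sum.swap)
  also have "\<dots> = (\<Sum>j\<in>{..<m}. card F * (fact k * fact (m - k)))"
  proof (rule sum.cong[OF refl])
    fix j assume j: "j \<in> {..<m}"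
    have "(\<Sum>xs\<in>?P. if arc k xs j \<in> F then 1 else (0::nat)) = card {xs\<in>?P. arc k xs j \<in> F}"
      using card_filter_sum[of ?P] by simp
    also have "{xs\<in>?P. arc k xs j \<in> F} = (\<Union>X\<in>F. {xs\<in>?P. arc k xs j = X})" by auto
    also have "card \<dots> = (\<Sum>X\<in>F. card {xs\<in>?P. arc k xs j = X})"
      by (rule card_UN_disjoint) (use fF in auto)
    also have "\<dots> = (\<Sum>X\<in>F. fact k * fact (m - k))"
    proof (rule sum.cong[OF refl])
      fix X assume "X \<in> F"
      then show "card {xs\<in>?P. arc k xs j = X} = fact k * fact (m - k)"
        using perms_arc_count[of G X k j] F G km j by auto
    qed
    finally show "(\<Sum>xs\<in>?P. if arc k xs j \<in> F then 1 else (0::nat)) = card F * (fact k * fact (m - k))"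
      by simp
  qed
  finally show ?thesis by (simp add: mult.commute mult.left_commute)
qed

lemma ekr_main:
  assumes G: "finite G" "card G = m" and k1: "1 \<le> k" and mk: "2*k \<le> m"
    and F: "F \<subseteq> {X. X \<subseteq> G \<and> card X = k}" and I: "\<forall>X\<in>F. \<forall>Y\<in>F. X \<inter> Y \<noteq> {}"
    and strict: "\<exists>xs\<in>permutations_of_set G. card {j. j < m \<and> arc k xs j \<in> F} < k"
  shows "card F * m < k * (m choose k)"
proof -
  let ?P = "permutations_of_set G"
  have m0: "0 < m" using k1 mk by simp
  have "card F * m * (fact k * fact (m - k)) = (\<Sum>xs\<in>?P. card {j. j < m \<and> arc k xs j \<in> F})"
    using ekr_sum[OF G _ m0 F] mk by simp
  also have "\<dots> < (\<Sum>xs\<in>?P. k)"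
  proof (rule sum_strict_mono_ex1)
    show "finite ?P" by simp
    show "\<forall>x\<in>?P. card {j. j < m \<and> arc k x j \<in> F} \<le> k"
      using list_bound[OF _ _ mk k1 I] length_finite_permutations_of_set G(2)
      by (auto simp: permutations_of_set_def)
    show "\<exists>a\<in>?P. card {j. j < m \<and> arc k a j \<in> F} < k" using strict .
  qed
  also have "\<dots> = k * fact m" using G by simp
  also have "\<dots> = k * (m choose k) * (fact k * fact (m - k))"
    using binomial_fact_lemma[of k m] mk by (simp add: mult.commute mult.left_commute)
  finally show ?thesis by (simp add: mult.assoc)
qed

lemma ekr_weak:
  assumes G: "finite G" "card G = m" and k1: "1 \<le> k" and mk: "2*k \<le> m"
    and F: "F \<subseteq> {X. X \<subseteq> G \<and> card X = k}" and I: "\<forall>X\<in>F. \<forall>Y\<in>F. X \<inter> Y \<noteq> {}"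
  shows "card F * m \<le> k * (m choose k)"
proof -
  let ?P = "permutations_of_set G"
  have m0: "0 < m" using k1 mk by simp
  have "card F * m * (fact k * fact (m - k)) = (\<Sum>xs\<in>?P. card {j. j < m \<and> arc k xs j \<in> F})"
    using ekr_sum[OF G _ m0 F] mk by simp
  also have "\<dots> \<le> (\<Sum>xs\<in>?P. k)"
    by (rule sum_mono) (use list_bound[OF _ _ mk k1 I] length_finite_permutations_of_set G(2) in
        \<open>auto simp: permutations_of_set_def\<close>)
  also have "\<dots> = k * fact m" using G by simp
  also have "\<dots> = k * (m choose k) * (fact k * fact (m - k))"
    using binomial_fact_lemma[of k m] mk by (simp add: mult.commute mult.left_commute)
  finally show ?thesis by (simp add: mult.assoc)
qed

lemma strict_list:
  assumes G: "finite G" "card G = m" and mk: "4*k \<le> m" and k2: "2 \<le> k"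
    and AB: "A \<subseteq> G" "B \<subseteq> G" "card A = k" "card B = k" "A \<inter> B = {}"
    and AF: "A \<in> F" and FB: "\<forall>X\<in>F. X \<noteq> A \<longrightarrow> X \<inter> A \<noteq> {} \<and> X \<inter> B \<noteq> {}"
  shows "\<exists>xs\<in>permutations_of_set G. card {j. j < m \<and> arc k xs j \<in> F} < k"
proof -
  have fA: "finite A" "finite B" using finite_subset[OF AB(1) G(1)] finite_subset[OF AB(2) G(1)] by auto
  have "k \<le> card (G - (A \<union> B))"
  proof -
    have "card (G - (A \<union> B)) = card G - card (A \<union> B)" using AB G by (simp add: card_Diff_subset fA)
    also have "card (A \<union> B) = 2*k" using AB fA card_Un_disjoint[of A B] by simp
    finally show ?thesis using G mk by simp
  qed
  then obtain C where C: "C \<subseteq> G - (A \<union> B)" "card C = k" by (rule obtain_subset_with_card_n)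
  define D where "D = G - A - B - C"
  have fC: "finite C" "finite D" using finite_subset[OF _ G(1), of C] C G(1) unfolding D_def by auto
  obtain as where as: "set as = A" "distinct as" using finite_distinct_list[OF fA(1)] by blast
  obtain bs where bs: "set bs = B" "distinct bs" using finite_distinct_list[OF fA(2)] by blast
  obtain cs where cs: "set cs = C" "distinct cs" using finite_distinct_list[OF fC(1)] by blast
  obtain ds where ds: "set ds = D" "distinct ds" using finite_distinct_list[OF fC(2)] by blast
  have la: "length as = k" "length bs = k" "length cs = k"
    using distinct_card[OF as(2)] distinct_card[OF bs(2)] distinct_card[OF cs(2)] as(1) bs(1) cs(1) AB C by simp_all
  define xs where "xs = as @ cs @ bs @ ds"
  have sx: "set xs = G" unfolding xs_def D_def using as(1) bs(1) cs(1) ds(1) AB(1,2) C(1) by (auto simp: D_def)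
  have "distinct xs" unfolding xs_def D_def using as bs cs ds AB(5) C(1) by (auto simp: D_def)
  then have xsP: "xs \<in> permutations_of_set G" using sx by (simp add: permutations_of_set_def)
  have dx: "distinct xs" and lx: "length xs = m"
    using xsP G length_finite_permutations_of_set by (auto simp: permutations_of_set_def)
  have m0: "0 < m" using mk k2 by simp
  have nA: "xs ! q = as ! q" if "q < k" for q using that la unfolding xs_def by (simp add: nth_append)
  have nB: "xs ! (2*k + q) = bs ! q" if "q < k" for q using that la unfolding xs_def by (simp add: nth_append)
  have inA: "p < k" if "p < m" "xs ! p \<in> A" for p
  proof -
    have "xs ! p \<in> set as" using that(2) as(1) by simp
    then obtain q where q: "q < k" "as ! q = xs ! p" using la(1) by (auto simp: in_set_conv_nth)
    have "xs ! q = xs ! p" using nA q by simp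
    moreover have "q < m" using q mk by simp
    ultimately have "q = p" using nth_eq_iff_index_eq[OF dx, of q p] that(1) lx by simp
    then show ?thesis using q by simp
  qed
  have inB: "2*k \<le> p \<and> p < 3*k" if "p < m" "xs ! p \<in> B" for p
  proof -
    have "xs ! p \<in> set bs" using that(2) bs(1) by simp
    then obtain q where q: "q < k" "bs ! q = xs ! p" using la(2) by (auto simp: in_set_conv_nth)
    have "xs ! (2*k+q) = xs ! p" using nB q by simp
    moreover have "2*k+q < m" using q mk by simp
    ultimately have "2*k+q = p" using nth_eq_iff_index_eq[OF dx, of "2*k+q" p] that(1) lx by simp
    then show ?thesis using q by simp
  qed
  have arcm: "xs ! ((j + t) mod m) \<in> arc k xs j" if "t < k" for j t
    using that lx unfolding arc_def by auto
  have sub: "{j. j < m \<and> arc k xs j \<in> F} \<subseteq> {0}"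
  proof
    fix j assume j: "j \<in> {j. j < m \<and> arc k xs j \<in> F}"
    then have jm: "j < m" and jF: "arc k xs j \<in> F" by auto
    show "j \<in> {0}"
    proof (cases "arc k xs j = A")
      case True
      have "xs ! ((j + 0) mod m) \<in> A" using arcm[of 0 j] True k2 by simp
      then have "j < k" using inA jm by simp
      have "xs ! ((j + (k - 1)) mod m) \<in> A" using arcm[of "k-1" j] True k2 by simp
      moreover have "(j + (k - 1)) mod m = j + (k - 1)" using \<open>j < k\<close> mk by simp
      ultimately have "j + (k - 1) < k" using inA \<open>j < k\<close> mk by simp
      then show ?thesis using k2 by simp
    next
      case False
      then have "arc k xs j \<inter> A \<noteq> {}" "arc k xs j \<inter> B \<noteq> {}" using FB jF by auto
      then obtain y1 y2 where y: "y1 \<in> arc k xs j" "y1 \<in> A" "y2 \<in> arc k xs j" "y2 \<in> B" by blast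
      obtain t1 where t1: "t1 < k" "xs ! ((j + t1) mod m) \<in> A" using y(1,2) lx unfolding arc_def by auto
      obtain t2 where t2: "t2 < k" "xs ! ((j + t2) mod m) \<in> B" using y(3,4) lx unfolding arc_def by auto
      note t = t1(1) t2(1) t1(2) t2(2)
      have p1: "(j + t1) mod m < k" using inA t(3) m0 by simp
      have p2: "2*k \<le> (j + t2) mod m" "(j + t2) mod m < 3*k" using inB t(4) m0 by auto
      have w1: "(j + t1) mod m = (if j + t1 < m then j + t1 else j + t1 - m)"
        using mod_wrap[of j m t1] jm t mk by simp
      have w2: "(j + t2) mod m = (if j + t2 < m then j + t2 else j + t2 - m)"
        using mod_wrap[of j m t2] jm t mk by simp
      show ?thesis
      proof (cases "j + t1 < m")
        case True
        then have "j + t1 < k" using p1 w1 by simp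
        show ?thesis
        proof (cases "j + t2 < m")
          case True
          then show ?thesis using \<open>j + t1 < k\<close> p2 w2 t by simp
        next
          case False
          then show ?thesis using \<open>j + t1 < k\<close> p2 w2 t mk by simp
        qed
      next
        case False
        then have "j + t1 - m < k" using p1 w1 by simp
        show ?thesis
        proof (cases "j + t2 < m")
          case True
          then show ?thesis using \<open>j + t1 - m < k\<close> False p2 w2 t mk by simp
        next
          case False
          then show ?thesis using \<open>j + t1 - m < k\<close> \<open>\<not> j + t1 < m\<close> p2 w2 t mk by simp
        qed
      qed
    qed
  qed
  have "card {j. j < m \<and> arc k xs j \<in> F} \<le> 1" using card_mono[OF _ sub] by simp
  then show ?thesis using xsP k2 by (intro bexI[of _ xs]) auto
qed

definition gnb :: "'a set \<Rightarrow> ('a \<Rightarrow> 'a \<Rightarrow> bool) \<Rightarrow> 'a set \<Rightarrow> 'a set" where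
  "gnb V adj C = {y \<in> V. y \<notin> C \<and> (\<exists>x\<in>C. adj x y)}"

definition gbar :: "'a set \<Rightarrow> ('a \<Rightarrow> 'a \<Rightarrow> bool) \<Rightarrow> 'a set \<Rightarrow> 'a set" where
  "gbar V adj C = V - C - gnb V adj C"

definition gfrag :: "'a set \<Rightarrow> ('a \<Rightarrow> 'a \<Rightarrow> bool) \<Rightarrow> 'a set \<Rightarrow> bool" where
  "gfrag V adj C \<longleftrightarrow> C \<subseteq> V \<and> C \<noteq> {} \<and> gbar V adj C \<noteq> {}"

lemma gbar_noadj:
  assumes "x \<in> C" "y \<in> gbar V adj C"
  shows "\<not> adj x y"
  using assms unfolding gbar_def gnb_def by auto

lemma gfrag_gbar:
  assumes sym: "\<And>x y. adj x y \<Longrightarrow> adj y x" and "gfrag V adj C"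
  shows "gfrag V adj (gbar V adj C)"
proof -
  have "C \<subseteq> gbar V adj (gbar V adj C)"
    using sym assms(2) unfolding gfrag_def gbar_def gnb_def by auto
  then show ?thesis using assms(2) unfolding gfrag_def gbar_def by auto
qed

lemma atom_lemma:
  assumes fin: "finite V" and sym: "\<And>x y. adj x y \<Longrightarrow> adj y x"
    and kmin: "\<forall>C. gfrag V adj C \<longrightarrow> \<kappa> \<le> card (gnb V adj C)"
    and A: "gfrag V adj A" "card (gnb V adj A) = \<kappa>"
    and amin: "\<forall>C. gfrag V adj C \<and> card (gnb V adj C) = \<kappa> \<longrightarrow> card A \<le> card C"
    and X: "gfrag V adj X" "card (gnb V adj X) = \<kappa>" and AX: "A \<inter> X \<noteq> {}"
  shows "A \<subseteq> X"
proof -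
  let ?N = "gnb V adj" and ?B = "gbar V adj"
  have AV: "A \<subseteq> V" and XV: "X \<subseteq> V" using A X unfolding gfrag_def by auto
  have fA: "finite A" "finite X" using AV XV fin finite_subset by auto
  have fN: "finite (?N C)" for C using fin unfolding gnb_def by simp
  have fB: "finite (?B C)" for C using fin unfolding gbar_def by simp
  have Bne: "?B A \<noteq> {}" using A unfolding gfrag_def by auto
  have partV: "V = X \<union> ?N X \<union> ?B X" using XV unfolding gbar_def gnb_def by auto
  have N_AX: "?N (A \<inter> X) \<subseteq> (A \<inter> ?N X) \<union> (?N A \<inter> ?N X) \<union> (?N A \<inter> X)"
  proof
    fix v assume v: "v \<in> ?N (A \<inter> X)"
    then obtain u where u: "u \<in> A" "u \<in> X" "adj u v" and vV: "v \<in> V" and vn: "v \<notin> A \<inter> X"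
      unfolding gnb_def by auto
    have "v \<in> A \<or> v \<in> ?N A" using u vV unfolding gnb_def by auto
    moreover have "v \<in> X \<or> v \<in> ?N X" using u vV unfolding gnb_def by auto
    ultimately show "v \<in> (A \<inter> ?N X) \<union> (?N A \<inter> ?N X) \<union> (?N A \<inter> X)" using vn by auto
  qed
  have fragAX': "gfrag V adj (A \<inter> X)"
  proof -
    obtain w where w: "w \<in> ?B A" using Bne by auto
    have "w \<in> ?B (A \<inter> X)" using w unfolding gbar_def gnb_def by auto
    then show ?thesis using AX AV unfolding gfrag_def by auto
  qed
  have geK: "\<kappa> \<le> card (?N (A \<inter> X))" using kmin fragAX' by blast
  show ?thesis
  proof (cases "?B A \<inter> ?B X = {}")
    case False
    let ?Y = "?B A \<inter> ?B X"
    have N_Y: "?N ?Y \<subseteq> (?B A \<inter> ?N X) \<union> (?N A \<inter> ?N X) \<union> (?N A \<inter> ?B X)"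
    proof
      fix v assume v: "v \<in> ?N ?Y"
      then obtain u where u: "u \<in> ?B A" "u \<in> ?B X" "adj u v" and vV: "v \<in> V" and vn: "v \<notin> ?Y"
        unfolding gnb_def by auto
      have "v \<notin> A"
      proof
        assume "v \<in> A"
        then have "\<not> adj v u" using gbar_noadj[of v A u V adj] u(1) by blast
        then show False using sym[of u v] u(3) by blast
      qed
      then have "v \<in> ?B A \<or> v \<in> ?N A" using vV unfolding gbar_def by auto
      moreover have "v \<notin> X"
      proof
        assume "v \<in> X"
        then have "\<not> adj v u" using gbar_noadj[of v X u V adj] u(2) by blast
        then show False using sym[of u v] u(3) by blast
      qed
      then have "v \<in> ?B X \<or> v \<in> ?N X" using vV unfolding gbar_def by auto
      ultimately show "v \<in> (?B A \<inter> ?N X) \<union> (?N A \<inter> ?N X) \<union> (?N A \<inter> ?B X)" using vn by auto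
    qed
    have fragY: "gfrag V adj ?Y"
    proof -
      have "A \<inter> X \<subseteq> ?B ?Y"
      proof
        fix x assume x: "x \<in> A \<inter> X"
        then have "x \<in> V" "x \<notin> ?Y" using AV unfolding gbar_def by auto
        moreover have "x \<notin> ?N ?Y"
        proof
          assume "x \<in> ?N ?Y"
          then obtain u where u: "u \<in> ?B A" "adj u x" unfolding gnb_def by auto
          have "\<not> adj x u" using gbar_noadj[of x A u V adj] x u(1) by blast
          then show False using sym[of u x] u(2) by blast
        qed
        ultimately show "x \<in> ?B ?Y" unfolding gbar_def by auto
      qed
      then show ?thesis using False AX unfolding gfrag_def gbar_def by auto
    qed
    let ?P1 = "(A \<inter> ?N X) \<union> (?N A \<inter> ?N X) \<union> (?N A \<inter> X)"
    let ?P2 = "(?B A \<inter> ?N X) \<union> (?N A \<inter> ?N X) \<union> (?N A \<inter> ?B X)"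
    have i: "?P1 \<inter> ?P2 = ?N A \<inter> ?N X" unfolding gbar_def by auto
    have u: "?P1 \<union> ?P2 \<subseteq> ?N A \<union> ?N X" by auto
    have fP: "finite ?P1" "finite ?P2" using fN by auto
    have "card ?P1 + card ?P2 = card (?P1 \<union> ?P2) + card (?P1 \<inter> ?P2)"
      using card_Un_Int[OF fP] by simp
    also have "\<dots> \<le> card (?N A \<union> ?N X) + card (?N A \<inter> ?N X)"
      using card_mono[OF _ u] fN i by simp
    also have "\<dots> = card (?N A) + card (?N X)" using card_Un_Int[OF fN fN] by simp
    finally have s: "card ?P1 + card ?P2 \<le> 2 * \<kappa>" using A X by simp
    have "card (?N (A \<inter> X)) \<le> card ?P1" using card_mono[OF _ N_AX] fP by simp
    moreover have "card (?N ?Y) \<le> card ?P2" using card_mono[OF _ N_Y] fP by simp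
    moreover have "\<kappa> \<le> card (?N ?Y)" using kmin fragY by blast
    ultimately have "card (?N (A \<inter> X)) = \<kappa>" using s geK by linarith
    then have "card A \<le> card (A \<inter> X)" using amin fragAX' by blast
    then have "A = A \<inter> X" using card_seteq[OF fA(1) Int_lower1[of A X]] by simp
    then show ?thesis by blast
  next
    case True
    have fragBX: "gfrag V adj (?B X)" using gfrag_gbar[of adj, OF sym X(1)] .
    have "?N (?B X) \<subseteq> ?N X" using sym unfolding gnb_def gbar_def by auto
    then have "card (?N (?B X)) \<le> \<kappa>" using card_mono[OF fN] X(2) by metis
    then have cBX: "card (?N (?B X)) = \<kappa>" using kmin fragBX by (simp add: le_antisym)
    have big: "card A \<le> card (?B X)" using amin fragBX cBX by blast
    have BX_sub: "?B X \<subseteq> A \<union> ?N A" using True unfolding gbar_def by auto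
    have cBX2: "card (?B X) \<le> card (A \<inter> ?B X) + card (?N A \<inter> ?B X)"
    proof -
      have e: "?B X = (A \<inter> ?B X) \<union> (?N A \<inter> ?B X)" using BX_sub by auto
      show ?thesis using card_Un_le[of "A \<inter> ?B X" "?N A \<inter> ?B X"] by (subst e) simp
    qed
    have partA: "card A = card (A \<inter> X) + card (A \<inter> ?N X) + card (A \<inter> ?B X)"
    proof -
      have e: "A = ((A \<inter> X) \<union> (A \<inter> ?N X)) \<union> (A \<inter> ?B X)" using AV partV by auto
      have d1: "(A \<inter> X) \<inter> (A \<inter> ?N X) = {}" unfolding gnb_def by auto
      have d2: "((A \<inter> X) \<union> (A \<inter> ?N X)) \<inter> (A \<inter> ?B X) = {}" unfolding gbar_def by auto
      have "card A = card ((A \<inter> X) \<union> (A \<inter> ?N X)) + card (A \<inter> ?B X)"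
        using card_Un_disjoint[OF _ _ d2] fA by (subst e) simp
      also have "card ((A \<inter> X) \<union> (A \<inter> ?N X)) = card (A \<inter> X) + card (A \<inter> ?N X)"
        using card_Un_disjoint[OF _ _ d1] fA by simp
      finally show ?thesis .
    qed
    have partN: "card (?N A \<inter> X) + card (?N A \<inter> ?N X) + card (?N A \<inter> ?B X) \<le> \<kappa>"
    proof -
      have sub: "((?N A \<inter> X) \<union> (?N A \<inter> ?N X)) \<union> (?N A \<inter> ?B X) \<subseteq> ?N A" by auto
      have d1: "(?N A \<inter> X) \<inter> (?N A \<inter> ?N X) = {}" unfolding gnb_def by auto
      have d2: "((?N A \<inter> X) \<union> (?N A \<inter> ?N X)) \<inter> (?N A \<inter> ?B X) = {}" unfolding gbar_def by auto
      have "card (((?N A \<inter> X) \<union> (?N A \<inter> ?N X)) \<union> (?N A \<inter> ?B X))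
          = card (?N A \<inter> X) + card (?N A \<inter> ?N X) + card (?N A \<inter> ?B X)"
        using card_Un_disjoint[OF _ _ d2] card_Un_disjoint[OF _ _ d1] fN by simp
      moreover have "card (((?N A \<inter> X) \<union> (?N A \<inter> ?N X)) \<union> (?N A \<inter> ?B X)) \<le> card (?N A)"
        using card_mono[OF fN sub] .
      ultimately show ?thesis using A(2) by simp
    qed
    have c1: "card (?N (A \<inter> X)) \<le> card ((A \<inter> ?N X) \<union> (?N A \<inter> ?N X) \<union> (?N A \<inter> X))"
      using card_mono[OF _ N_AX] fN fA by simp
    have c2: "card ((A \<inter> ?N X) \<union> (?N A \<inter> ?N X) \<union> (?N A \<inter> X))
        \<le> card (A \<inter> ?N X) + card (?N A \<inter> ?N X) + card (?N A \<inter> X)"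
      using card_Un_le[of "(A \<inter> ?N X) \<union> (?N A \<inter> ?N X)" "?N A \<inter> X"]
        card_Un_le[of "A \<inter> ?N X" "?N A \<inter> ?N X"] by simp
    moreover have "card (A \<inter> X) > 0" using AX fA by auto
    ultimately have "card (?N (A \<inter> X)) < \<kappa>" using c1 big cBX2 partA partN by linarith
    then show ?thesis using geK by linarith
  qed
qed

lemma auto_gnb:
  assumes b: "bij_betw \<phi> V V" and ad: "\<forall>x\<in>V. \<forall>y\<in>V. adj (\<phi> x) (\<phi> y) = adj x y" and C: "C \<subseteq> V"
  shows "gnb V adj (\<phi> ` C) = \<phi> ` gnb V adj C"
proof
  have inj: "inj_on \<phi> V" and im: "\<phi> ` V = V" using b by (auto simp: bij_betw_def)
  show "gnb V adj (\<phi> ` C) \<subseteq> \<phi> ` gnb V adj C"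
  proof
    fix y assume y: "y \<in> gnb V adj (\<phi> ` C)"
    then have yV: "y \<in> V" unfolding gnb_def by auto
    then obtain z where z: "z \<in> V" "y = \<phi> z" using im by auto
    from y obtain x where x: "x \<in> C" "adj (\<phi> x) y" and yn: "y \<notin> \<phi> ` C" unfolding gnb_def by auto
    have "adj x z" using ad x z C by auto
    moreover have "z \<notin> C" using yn z by auto
    ultimately have "z \<in> gnb V adj C" using z x unfolding gnb_def by auto
    then show "y \<in> \<phi> ` gnb V adj C" using z by auto
  qed
  show "\<phi> ` gnb V adj C \<subseteq> gnb V adj (\<phi> ` C)"
  proof
    fix y assume "y \<in> \<phi> ` gnb V adj C"
    then obtain z where z: "z \<in> gnb V adj C" "y = \<phi> z" by auto
    then obtain x where x: "x \<in> C" "adj x z" and zV: "z \<in> V" and zn: "z \<notin> C" unfolding gnb_def by auto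
    have "adj (\<phi> x) (\<phi> z)" using ad x zV C by auto
    moreover have "\<phi> z \<notin> \<phi> ` C" using zn inj zV C by (auto simp: inj_on_def)
    moreover have "\<phi> z \<in> V" using zV im by auto
    ultimately show "y \<in> gnb V adj (\<phi> ` C)" using z x unfolding gnb_def by auto
  qed
qed

lemma auto_gbar:
  assumes b: "bij_betw \<phi> V V" and ad: "\<forall>x\<in>V. \<forall>y\<in>V. adj (\<phi> x) (\<phi> y) = adj x y" and C: "C \<subseteq> V"
  shows "gbar V adj (\<phi> ` C) = \<phi> ` gbar V adj C"
proof -
  have inj: "inj_on \<phi> V" and im: "\<phi> ` V = V" using b by (auto simp: bij_betw_def)
  have sub: "gnb V adj C \<subseteq> V" unfolding gnb_def by auto
  have "\<phi> ` (V - C - gnb V adj C) = \<phi> ` (V - C) - \<phi> ` gnb V adj C"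
    by (rule inj_on_image_set_diff[OF inj]) (use sub in auto)
  also have "\<phi> ` (V - C) = \<phi> ` V - \<phi> ` C"
    by (rule inj_on_image_set_diff[OF inj]) (use C in auto)
  finally have "\<phi> ` gbar V adj C = \<phi> ` V - \<phi> ` C - \<phi> ` gnb V adj C" unfolding gbar_def .
  then show ?thesis unfolding gbar_def using auto_gnb[OF b ad C] im by simp
qed

lemma auto_gfrag:
  assumes b: "bij_betw \<phi> V V" and ad: "\<forall>x\<in>V. \<forall>y\<in>V. adj (\<phi> x) (\<phi> y) = adj x y"
    and C: "gfrag V adj C"
  shows "gfrag V adj (\<phi> ` C)" "card (gnb V adj (\<phi> ` C)) = card (gnb V adj C)" "card (\<phi> ` C) = card C"
proof -
  have inj: "inj_on \<phi> V" and im: "\<phi> ` V = V" using b by (auto simp: bij_betw_def)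
  have CV: "C \<subseteq> V" using C unfolding gfrag_def by auto
  show "gfrag V adj (\<phi> ` C)" using C CV im auto_gbar[OF b ad CV] unfolding gfrag_def by auto
  have "gnb V adj C \<subseteq> V" unfolding gnb_def by auto
  then show "card (gnb V adj (\<phi> ` C)) = card (gnb V adj C)"
    using auto_gnb[OF b ad CV] card_image inj by (metis inj_on_subset)
  show "card (\<phi> ` C) = card C" using card_image inj CV by (metis inj_on_subset)
qed

lemma perm_exists:
  assumes U: "finite U" and s: "x0 \<subseteq> U" "w0 \<subseteq> U" "x \<subseteq> U" "y \<subseteq> U"
    and c: "card x0 = card x" "card w0 = card y" "card (x0 \<inter> w0) = card (x \<inter> y)"
  shows "\<exists>\<pi>. bij_betw \<pi> U U \<and> \<pi> ` x0 = x \<and> \<pi> ` w0 = y"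
proof -
  have f: "finite x0" "finite w0" "finite x" "finite y"
    using finite_subset[OF s(1) U] finite_subset[OF s(2) U] finite_subset[OF s(3) U] finite_subset[OF s(4) U] by auto
  define R1 R2 R3 R4 where "R1 = x0 \<inter> w0" "R2 = x0 - w0" "R3 = w0 - x0" "R4 = U - (x0 \<union> w0)"
  define T1 T2 T3 T4 where "T1 = x \<inter> y" "T2 = x - y" "T3 = y - x" "T4 = U - (x \<union> y)"
  have c2: "card R2 = card T2" unfolding R1_R2_R3_R4_def T1_T2_T3_T4_def
    using c f by (metis card_Diff_subset_Int Diff_Int2 Int_lower1 Int_commute card_Diff_subset finite_Int)
  have c3: "card R3 = card T3" unfolding R1_R2_R3_R4_def T1_T2_T3_T4_def
    using c f by (metis card_Diff_subset_Int Int_commute card_Diff_subset finite_Int)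
  have cu: "card (x0 \<union> w0) = card (x \<union> y)"
    using card_Un_Int[OF f(1,2)] card_Un_Int[OF f(3,4)] c by simp
  have c4: "card R4 = card T4" unfolding R1_R2_R3_R4_def T1_T2_T3_T4_def
    using cu s f U by (simp add: card_Diff_subset)
  have c1: "card R1 = card T1" unfolding R1_R2_R3_R4_def T1_T2_T3_T4_def using c by simp
  have fR: "finite R1" "finite R2" "finite R3" "finite R4" "finite T1" "finite T2" "finite T3" "finite T4"
    unfolding R1_R2_R3_R4_def T1_T2_T3_T4_def using f U by auto
  obtain f1 where f1: "bij_betw f1 R1 T1" using finite_same_card_bij[OF fR(1,5) c1] by blast
  obtain f2 where f2: "bij_betw f2 R2 T2" using finite_same_card_bij[OF fR(2,6) c2] by blast
  obtain f3 where f3: "bij_betw f3 R3 T3" using finite_same_card_bij[OF fR(3,7) c3] by blast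
  obtain f4 where f4: "bij_betw f4 R4 T4" using finite_same_card_bij[OF fR(4,8) c4] by blast
  define \<pi> where "\<pi> z = (if z \<in> R1 then f1 z else if z \<in> R2 then f2 z else if z \<in> R3 then f3 z else f4 z)" for z
  have b1: "bij_betw \<pi> R1 T1" using f1 by (rule bij_betw_cong[THEN iffD1, rotated]) (simp add: \<pi>_def)
  have b2: "bij_betw \<pi> R2 T2" using f2
    by (rule bij_betw_cong[THEN iffD1, rotated]) (auto simp: \<pi>_def R1_R2_R3_R4_def)
  have b3: "bij_betw \<pi> R3 T3" using f3
    by (rule bij_betw_cong[THEN iffD1, rotated]) (auto simp: \<pi>_def R1_R2_R3_R4_def)
  have b4: "bij_betw \<pi> R4 T4" using f4
    by (rule bij_betw_cong[THEN iffD1, rotated]) (auto simp: \<pi>_def R1_R2_R3_R4_def)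
  have b12: "bij_betw \<pi> (R1 \<union> R2) (T1 \<union> T2)"
    by (rule bij_betw_combine[OF b1 b2]) (auto simp: T1_T2_T3_T4_def)
  have b123: "bij_betw \<pi> (R1 \<union> R2 \<union> R3) (T1 \<union> T2 \<union> T3)"
    by (rule bij_betw_combine[OF b12 b3]) (auto simp: T1_T2_T3_T4_def)
  have b1234: "bij_betw \<pi> (R1 \<union> R2 \<union> R3 \<union> R4) (T1 \<union> T2 \<union> T3 \<union> T4)"
    by (rule bij_betw_combine[OF b123 b4]) (auto simp: T1_T2_T3_T4_def)
  have eR: "R1 \<union> R2 \<union> R3 \<union> R4 = U" unfolding R1_R2_R3_R4_def using s by auto
  have eT: "T1 \<union> T2 \<union> T3 \<union> T4 = U" unfolding T1_T2_T3_T4_def using s by auto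
  have "\<pi> ` x0 = \<pi> ` R1 \<union> \<pi> ` R2" unfolding R1_R2_R3_R4_def by auto
  also have "\<dots> = T1 \<union> T2" using b1 b2 by (simp add: bij_betw_def)
  also have "\<dots> = x" unfolding T1_T2_T3_T4_def by auto
  finally have ex: "\<pi> ` x0 = x" .
  have "\<pi> ` w0 = \<pi> ` R1 \<union> \<pi> ` R3" unfolding R1_R2_R3_R4_def by auto
  also have "\<dots> = T1 \<union> T3" using b1 b3 by (simp add: bij_betw_def)
  also have "\<dots> = y" unfolding T1_T2_T3_T4_def by auto
  finally have ey: "\<pi> ` w0 = y" .
  show ?thesis using b1234 eR eT ex ey by auto
qed

abbreviation KV where "KV n k \<equiv> kneser_vertices n k"

lemma kv_sub: "kneser_vertices n k \<subseteq> Pow {1..n}"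
  unfolding kneser_vertices_def by auto

lemma kv_finite: "finite (kneser_vertices n k)"
  using finite_subset[OF kv_sub] by auto

lemma kadj_sym: "kneser_adj X Y \<Longrightarrow> kneser_adj Y X"
  unfolding kneser_adj_def by auto

lemma kv_card: "card (kneser_vertices n k) = n choose k"
  unfolding kneser_vertices_def using n_subsets[of "{1..n}" k] by simp

lemma perm_auto:
  assumes b: "bij_betw \<pi> {1..n} {1..n}"
  shows "bij_betw (image \<pi>) (kneser_vertices n k) (kneser_vertices n k)"
    "\<forall>X\<in>kneser_vertices n k. \<forall>Y\<in>kneser_vertices n k.
        kneser_adj (\<pi> ` X) (\<pi> ` Y) = kneser_adj X Y"
proof -
  have bp: "bij_betw (image \<pi>) (Pow {1..n}) (Pow {1..n})" using bij_betw_Pow[OF b] .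
  have inj: "inj_on \<pi> {1..n}" using b by (simp add: bij_betw_def)
  have cardp: "card (\<pi> ` X) = card X" if "X \<subseteq> {1..n}" for X
    using card_image[OF inj_on_subset[OF inj that]] .
  show "bij_betw (image \<pi>) (kneser_vertices n k) (kneser_vertices n k)"
    unfolding bij_betw_def
  proof
    show "inj_on (image \<pi>) (kneser_vertices n k)"
      using bp kv_sub by (meson bij_betw_def inj_on_subset)
    show "image \<pi> ` kneser_vertices n k = kneser_vertices n k"
    proof
      show "image \<pi> ` kneser_vertices n k \<subseteq> kneser_vertices n k"
      proof
        fix Z assume "Z \<in> image \<pi> ` kneser_vertices n k"
        then obtain X where X: "X \<in> kneser_vertices n k" "Z = \<pi> ` X" by auto
        then have "X \<subseteq> {1..n}" "card X = k" unfolding kneser_vertices_def by auto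
        moreover have "\<pi> ` X \<subseteq> {1..n}" using b \<open>X \<subseteq> {1..n}\<close> by (auto simp: bij_betw_def)
        ultimately show "Z \<in> kneser_vertices n k" using X cardp unfolding kneser_vertices_def by auto
      qed
      show "kneser_vertices n k \<subseteq> image \<pi> ` kneser_vertices n k"
      proof
        fix Y assume Y: "Y \<in> kneser_vertices n k"
        then have "Y \<in> Pow {1..n}" unfolding kneser_vertices_def by auto
        moreover have "image \<pi> ` Pow {1..n} = Pow {1..n}" using bp by (simp add: bij_betw_def)
        ultimately have "Y \<in> image \<pi> ` Pow {1..n}" by simp
        then obtain X where X: "X \<in> Pow {1..n}" "\<pi> ` X = Y" by blast
        then have "card X = k" using cardp Y unfolding kneser_vertices_def by auto
        then have "X \<in> kneser_vertices n k" using X unfolding kneser_vertices_def by auto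
        then show "Y \<in> image \<pi> ` kneser_vertices n k" using X by auto
      qed
    qed
  qed
  show "\<forall>X\<in>kneser_vertices n k. \<forall>Y\<in>kneser_vertices n k. kneser_adj (\<pi> ` X) (\<pi> ` Y) = kneser_adj X Y"
  proof (intro ballI)
    fix X Y assume "X \<in> kneser_vertices n k" "Y \<in> kneser_vertices n k"
    then have s: "X \<subseteq> {1..n}" "Y \<subseteq> {1..n}" unfolding kneser_vertices_def by auto
    have "\<pi> ` X \<inter> \<pi> ` Y = \<pi> ` (X \<inter> Y)" using inj_on_image_Int[OF inj s] by simp
    then show "kneser_adj (\<pi> ` X) (\<pi> ` Y) = kneser_adj X Y" unfolding kneser_adj_def by simp
  qed
qed

lemma nb_single:
  assumes "X \<in> kneser_vertices n k" "1 \<le> k"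
  shows "card (gnb (kneser_vertices n k) kneser_adj {X}) = (n - k) choose k"
proof -
  have X: "X \<subseteq> {1..n}" "card X = k" using assms unfolding kneser_vertices_def by auto
  have fX: "finite X" using X finite_subset by auto
  have "X \<noteq> {}" using X assms(2) by auto
  then have "gnb (kneser_vertices n k) kneser_adj {X} = {Y. Y \<subseteq> {1..n} - X \<and> card Y = k}"
    unfolding gnb_def kneser_adj_def kneser_vertices_def using X by auto
  moreover have "card ({1..n} - X) = n - k" using X fX by (simp add: card_Diff_subset)
  ultimately show ?thesis using n_subsets[of "{1..n} - X" k] by simp
qed

lemma atom_closed:
  fixes n k :: nat
  defines "V \<equiv> kneser_vertices n k"
  assumes kmin: "\<forall>C. gfrag V kneser_adj C \<longrightarrow> \<kappa> \<le> card (gnb V kneser_adj C)"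
    and A: "gfrag V kneser_adj A" "card (gnb V kneser_adj A) = \<kappa>"
    and amin: "\<forall>C. gfrag V kneser_adj C \<and> card (gnb V kneser_adj C) = \<kappa> \<longrightarrow> card A \<le> card C"
    and x0: "x0 \<in> A" "w0 \<in> A" and x: "x \<in> A" "y \<in> V" and c: "card (x \<inter> y) = card (x0 \<inter> w0)"
  shows "y \<in> A"
proof -
  have AV: "A \<subseteq> V" using A unfolding gfrag_def by auto
  have vs: "\<And>z. z \<in> V \<Longrightarrow> z \<subseteq> {1..n} \<and> card z = k" unfolding V_def kneser_vertices_def by auto
  have "x0 \<in> V" "w0 \<in> V" "x \<in> V" using AV x0 x by auto
  then have s: "x0 \<subseteq> {1..n}" "card x0 = k" "w0 \<subseteq> {1..n}" "card w0 = k" "x \<subseteq> {1..n}" "card x = k"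
    "y \<subseteq> {1..n}" "card y = k" using vs x(2) by auto
  obtain \<pi> where \<pi>: "bij_betw \<pi> {1..n} {1..n}" "\<pi> ` x0 = x" "\<pi> ` w0 = y"
    using perm_exists[of "{1..n}" x0 w0 x y] s c by auto
  note au = perm_auto[OF \<pi>(1), of k, folded V_def]
  have f1: "gfrag V kneser_adj (image \<pi> ` A)" and f2: "card (gnb V kneser_adj (image \<pi> ` A)) = \<kappa>"
    and f3: "card (image \<pi> ` A) = card A"
    using auto_gfrag[OF au A(1)] A(2) by auto
  have "x \<in> A \<inter> image \<pi> ` A" using x x0 \<pi>(2) by auto
  then have sub: "A \<subseteq> image \<pi> ` A"
    using atom_lemma[OF kv_finite[of n k, folded V_def] _ kmin A amin f1 f2] kadj_sym by blast
  have fin: "finite (image \<pi> ` A)" using f1 kv_finite[of n k] unfolding gfrag_def V_def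
    by (meson finite_subset)
  have "A = image \<pi> ` A" using card_seteq[OF fin sub] f3 by simp
  moreover have "y \<in> image \<pi> ` A" using x0 \<pi>(3) by auto
  ultimately show ?thesis by simp
qed

lemma atom_all:
  fixes n k :: nat
  assumes V_def: "V = kneser_vertices n k"
  assumes k1: "1 \<le> k" and nk: "2*k + 1 \<le> n"
    and cl: "\<And>x y. x \<in> A \<Longrightarrow> y \<in> V \<Longrightarrow> card (x \<inter> y) = j \<Longrightarrow> y \<in> A"
    and jk: "j < k" and AV: "A \<subseteq> V"
  shows "\<forall>x. x \<in> A \<longrightarrow> card (x - y) = d \<longrightarrow> y \<in> V \<longrightarrow> y \<in> A"
proof (induction d)
  case 0
  show ?case
  proof (intro allI impI)
    fix x assume x: "x \<in> A" "card (x - y) = 0" "y \<in> V"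
    have xv: "x \<subseteq> {1..n}" "card x = k" "y \<subseteq> {1..n}" "card y = k"
      using x AV unfolding V_def kneser_vertices_def by auto
    have fx: "finite x" "finite y" using xv finite_subset by auto
    have "x \<subseteq> y" using x(2) fx by auto
    then have "x = y" using card_seteq[OF fx(2)] xv by simp
    then show "y \<in> A" using x by simp
  qed
next
  case (Suc d)
  show ?case
  proof (intro allI impI)
    fix x assume x: "x \<in> A" "card (x - y) = Suc d" "y \<in> V"
    have xv: "x \<subseteq> {1..n}" "card x = k" "y \<subseteq> {1..n}" "card y = k"
      using x AV unfolding V_def kneser_vertices_def by auto
    have fx: "finite x" "finite y" using xv finite_subset by auto
    obtain a where a: "a \<in> x" "a \<notin> y" using x(2) by (metis Diff_iff card_0_eq fx(1) finite_Diff nat.distinct(1) ex_in_conv)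
    have "card (y - x) = card (x - y)"
      using card_Diff_subset_Int[of x y] card_Diff_subset_Int[of y x] fx xv by (simp add: Int_commute)
    then obtain b where b: "b \<in> y" "b \<notin> x" using x(2) by (metis Diff_iff card_0_eq fx(2) finite_Diff nat.distinct(1) ex_in_conv)
    define x' where "x' = insert b (x - {a})"
    have "card x > 0" using a fx card_gt_0_iff by blast
    then have x'v: "x' \<in> V" unfolding x'_def V_def kneser_vertices_def using xv a b fx
      by (auto simp: card_insert_if card_Diff_singleton)
    have x'y: "x' - y = (x - y) - {a}" unfolding x'_def using b by auto
    have cx': "card (x' - y) = d" unfolding x'y using x(2) a fx by (simp add: card_Diff_singleton)
    have "j \<le> card (x - {a})" using a fx xv jk by (simp add: card_Diff_singleton)
    then obtain Z1 where Z1: "Z1 \<subseteq> x - {a}" "card Z1 = j" "finite Z1" by (rule obtain_subset_with_card_n)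
    have "card ({1..n} - insert b x) = n - k - 1"
    proof -
      have "insert b x \<subseteq> {1..n}" using xv b by auto
      moreover have "card (insert b x) = k + 1" using b fx xv by simp
      ultimately show ?thesis using fx by (simp add: card_Diff_subset)
    qed
    then have "k - j \<le> card ({1..n} - insert b x)" using nk by simp
    then obtain Z2 where Z2: "Z2 \<subseteq> {1..n} - insert b x" "card Z2 = k - j" "finite Z2" by (rule obtain_subset_with_card_n)
    define z where "z = Z1 \<union> Z2"
    have fZ: "finite Z1" "finite Z2" using Z1 Z2 by auto
    have dZ: "Z1 \<inter> Z2 = {}" using Z1 Z2 by auto
    have zv: "z \<in> V" unfolding z_def V_def kneser_vertices_def
      using Z1 Z2 xv card_Un_disjoint[OF fZ dZ] jk by auto
    have "x \<inter> z = Z1" unfolding z_def using Z1 Z2 by auto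
    then have xz: "card (x \<inter> z) = j" using Z1 by simp
    have "z \<inter> x' = Z1" unfolding z_def x'_def using Z1 Z2 by auto
    then have zx': "card (z \<inter> x') = j" using Z1 by simp
    have "z \<in> A" using cl[OF x(1) zv xz] .
    then have "x' \<in> A" using cl[OF _ x'v zx'] by blast
    then show "y \<in> A" using Suc.IH cx' x(3) by blast
  qed
qed

lemma kneser_kappa:
  fixes n k :: nat
  defines "V \<equiv> kneser_vertices n k"
  assumes k1: "1 \<le> k" and nk: "2*k + 1 \<le> n" and C: "gfrag V kneser_adj C"
  shows "(n - k) choose k \<le> card (gnb V kneser_adj C)"
proof -
  obtain C0 where C0: "gfrag V kneser_adj C0"
    "\<forall>C. gfrag V kneser_adj C \<longrightarrow> card (gnb V kneser_adj C0) \<le> card (gnb V kneser_adj C)"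
    using ex_has_least_nat[of "gfrag V kneser_adj" C "\<lambda>C. card (gnb V kneser_adj C)"] C by blast
  define \<kappa> where "\<kappa> = card (gnb V kneser_adj C0)"
  have kmin: "\<forall>C. gfrag V kneser_adj C \<longrightarrow> \<kappa> \<le> card (gnb V kneser_adj C)" using C0 \<kappa>_def by blast
  obtain A where A: "gfrag V kneser_adj A \<and> card (gnb V kneser_adj A) = \<kappa>"
    and amin: "\<forall>C. gfrag V kneser_adj C \<and> card (gnb V kneser_adj C) = \<kappa> \<longrightarrow> card A \<le> card C"
    using ex_has_least_nat[of "\<lambda>C. gfrag V kneser_adj C \<and> card (gnb V kneser_adj C) = \<kappa>" C0 card]
      C0 \<kappa>_def by blast
  have AV: "A \<subseteq> V" and Ane: "A \<noteq> {}" and Abar: "gbar V kneser_adj A \<noteq> {}"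
    using A unfolding gfrag_def by auto
  have fA: "finite A" using AV kv_finite[of n k] finite_subset unfolding V_def by blast
  have "card A \<le> 1"
  proof (rule ccontr)
    assume "\<not> card A \<le> 1"
    then obtain x0 w0 where xw: "x0 \<in> A" "w0 \<in> A" "x0 \<noteq> w0"
      by (metis One_nat_def card.empty card.insert empty_iff finite.intros(1) insertI1 is_singletonI'
          is_singleton_altdef le_SucI le_zero_eq not_less_eq_eq)
    have xv: "x0 \<subseteq> {1..n}" "card x0 = k" "w0 \<subseteq> {1..n}" "card w0 = k"
      using xw AV unfolding V_def kneser_vertices_def by auto
    have fx: "finite x0" "finite w0" using xv finite_subset by auto
    have jk: "card (x0 \<inter> w0) < k"
    proof (rule ccontr)
      assume "\<not> card (x0 \<inter> w0) < k"
      then have "card (x0 \<inter> w0) \<ge> card x0" "card (x0 \<inter> w0) \<ge> card w0" using xv by auto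
      then have "x0 \<inter> w0 = x0" "x0 \<inter> w0 = w0" using card_seteq fx by (metis Int_lower1 Int_lower2)+
      then show False using xw by simp
    qed
    have cl: "\<And>x y. x \<in> A \<Longrightarrow> y \<in> V \<Longrightarrow> card (x \<inter> y) = card (x0 \<inter> w0) \<Longrightarrow> y \<in> A"
      using atom_closed[of n k \<kappa> A x0 w0, folded V_def] kmin A amin xw by blast
    have "\<forall>y\<in>V. y \<in> A"
    proof
      fix y assume "y \<in> V"
      have "\<forall>x. x \<in> A \<longrightarrow> card (x - y) = card (x0 - y) \<longrightarrow> y \<in> V \<longrightarrow> y \<in> A"
        by (rule atom_all[of V n k A "card (x0 \<inter> w0)"]) (use V_def k1 nk cl jk AV in auto)
      then show "y \<in> A" using xw \<open>y \<in> V\<close> by blast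
    qed
    then have "gbar V kneser_adj A = {}" unfolding gbar_def by auto
    then show False using Abar by simp
  qed
  then obtain v where v: "A = {v}" using Ane fA by (metis card_0_eq card_1_singletonE le_neq_implies_less less_one)
  have "v \<in> V" using v AV by auto
  then have "\<kappa> = (n - k) choose k" using A v nb_single[of v n k] k1 unfolding V_def by simp
  then show ?thesis using kmin C by simp
qed

definition cmp :: "nat set set \<Rightarrow> nat set \<Rightarrow> nat set set" where
  "cmp W x = {y \<in> W. reach W kneser_adj x y}"

lemma reach_sym: "reach W kneser_adj x y \<Longrightarrow> reach W kneser_adj y x"
  unfolding reach_def
proof (induction rule: rtranclp_induct)
  case base then show ?case by simp
next
  case (step y z)
  then have "(\<lambda>a b. a \<in> W \<and> b \<in> W \<and> kneser_adj a b) z y" using kadj_sym by blast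
  then show ?case using step.IH converse_rtranclp_into_rtranclp[of "\<lambda>a b. a \<in> W \<and> b \<in> W \<and> kneser_adj a b" z y x]
    by blast
qed

lemma reach_trans: "reach W kneser_adj x y \<Longrightarrow> reach W kneser_adj y z \<Longrightarrow> reach W kneser_adj x z"
  unfolding reach_def by (rule rtranclp_trans)

lemma reach_step: "x \<in> W \<Longrightarrow> y \<in> W \<Longrightarrow> kneser_adj x y \<Longrightarrow> reach W kneser_adj x y"
  unfolding reach_def by (simp add: r_into_rtranclp)

lemma reach_refl: "reach W kneser_adj x x"
  unfolding reach_def by simp

lemma components_eq: "components W kneser_adj = cmp W ` W"
  unfolding components_def cmp_def by auto

lemma cmp_self: "x \<in> W \<Longrightarrow> x \<in> cmp W x"
  unfolding cmp_def using reach_refl by auto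

lemma cmp_sub: "cmp W x \<subseteq> W"
  unfolding cmp_def by auto

lemma cmp_eqI: "y \<in> cmp W x \<Longrightarrow> cmp W y = cmp W x"
  unfolding cmp_def using reach_sym reach_trans by blast

lemma comp_disj:
  assumes "C1 \<in> components W kneser_adj" "C2 \<in> components W kneser_adj" "x \<in> C1" "x \<in> C2"
  shows "C1 = C2"
proof -
  obtain x1 x2 where "C1 = cmp W x1" "C2 = cmp W x2" using assms(1,2) unfolding components_eq by auto
  then show ?thesis using cmp_eqI assms(3,4) by metis
qed

lemma comp_closed:
  assumes "C \<in> components W kneser_adj" "x \<in> C" "y \<in> W" "kneser_adj x y"
  shows "y \<in> C"
proof -
  obtain x1 where C: "C = cmp W x1" using assms(1) unfolding components_eq by auto
  then have "reach W kneser_adj x1 x" "x \<in> W" using assms(2) unfolding cmp_def by auto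
  then have "reach W kneser_adj x1 y" using reach_step[OF _ assms(3,4)] reach_trans by blast
  then show ?thesis using C assms(3) unfolding cmp_def by auto
qed

lemma comp_sub: "C \<in> components W kneser_adj \<Longrightarrow> C \<subseteq> W"
  unfolding components_eq using cmp_sub by auto

lemma comp_ne: "C \<in> components W kneser_adj \<Longrightarrow> C \<noteq> {}"
  unfolding components_eq using cmp_self by auto

lemma comp_of: "x \<in> W \<Longrightarrow> \<exists>C\<in>components W kneser_adj. x \<in> C"
  unfolding components_eq using cmp_self by auto

lemma comp_finite: "finite W \<Longrightarrow> finite (components W kneser_adj)"
  unfolding components_eq by simp

lemma comp_indep:
  assumes "\<forall>x\<in>W. \<forall>y\<in>W. \<not> kneser_adj x y"
  shows "num_components W kneser_adj = card W"
proof -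
  have r: "reach W kneser_adj x y \<Longrightarrow> x = y" for x y
    unfolding reach_def
  proof (induction rule: rtranclp_induct)
    case base then show ?case by simp
  next
    case (step y z) then show ?case using assms by auto
  qed
  have "cmp W x = {x}" if "x \<in> W" for x using that r reach_refl unfolding cmp_def by auto
  then have "components W kneser_adj = (\<lambda>x. {x}) ` W" unfolding components_eq by auto
  moreover have "inj_on (\<lambda>x. {x}) W" by (auto simp: inj_on_def)
  ultimately show ?thesis unfolding num_components_def by (simp add: card_image)
qed

lemma gnb_sub_S:
  assumes "S \<subseteq> V" "C \<in> components (V - S) kneser_adj"
  shows "gnb V kneser_adj C \<subseteq> S"
proof
  fix Y assume Y: "Y \<in> gnb V kneser_adj C"
  then obtain X where X: "X \<in> C" "kneser_adj X Y" and YV: "Y \<in> V" and Yn: "Y \<notin> C"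
    unfolding gnb_def by auto
  show "Y \<in> S"
  proof (rule ccontr)
    assume "Y \<notin> S"
    then have "Y \<in> V - S" using YV by auto
    then have "Y \<in> C" using comp_closed[OF assms(2) X(1) _ X(2)] by blast
    then show False using Yn by simp
  qed
qed

lemma sum_nb_eq:
  assumes S: "S \<subseteq> V" and fV: "finite V"
  shows "(\<Sum>C\<in>components (V - S) kneser_adj. card (gnb V kneser_adj C))
       = (\<Sum>Y\<in>S. card {C\<in>components (V - S) kneser_adj. Y \<in> gnb V kneser_adj C})"
proof -
  let ?C = "components (V - S) kneser_adj"
  have fS: "finite S" using S fV finite_subset by auto
  have fC: "finite ?C" using comp_finite fV by simp
  have "(\<Sum>C\<in>?C. card (gnb V kneser_adj C)) = (\<Sum>C\<in>?C. \<Sum>Y\<in>S. if Y \<in> gnb V kneser_adj C then 1 else (0::nat))"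
  proof (rule sum.cong[OF refl])
    fix C assume C: "C \<in> ?C"
    have "gnb V kneser_adj C = {Y\<in>S. Y \<in> gnb V kneser_adj C}" using gnb_sub_S[OF S C] by auto
    then show "card (gnb V kneser_adj C) = (\<Sum>Y\<in>S. if Y \<in> gnb V kneser_adj C then 1 else 0)"
      using card_filter_sum[OF fS, of "\<lambda>Y. Y \<in> gnb V kneser_adj C"] by simp
  qed
  also have "\<dots> = (\<Sum>Y\<in>S. \<Sum>C\<in>?C. if Y \<in> gnb V kneser_adj C then 1 else (0::nat))" by (rule sum.swap)
  also have "\<dots> = (\<Sum>Y\<in>S. card {C\<in>?C. Y \<in> gnb V kneser_adj C})"
    using card_filter_sum[OF fC] by simp
  finally show ?thesis .
qed

lemma rep_family:
  fixes n k :: nat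
  defines "V \<equiv> kneser_vertices n k"
  assumes k1: "1 \<le> k" and S: "S \<subseteq> V"
    and sub: "\<A> \<subseteq> components (V - S) kneser_adj"
    and r: "\<forall>C\<in>\<A>. r C \<in> C \<and> r C \<inter> Y = {}"
  shows "card (r ` \<A>) = card \<A>" "r ` \<A> \<subseteq> {X. X \<subseteq> {1..n} - Y \<and> card X = k}"
    "\<forall>X\<in>r ` \<A>. \<forall>X'\<in>r ` \<A>. X \<inter> X' \<noteq> {}"
proof -
  let ?C = "components (V - S) kneser_adj"
  have inj: "inj_on r \<A>"
  proof (rule inj_onI)
    fix C1 C2 assume c: "C1 \<in> \<A>" "C2 \<in> \<A>" "r C1 = r C2"
    then have "r C1 \<in> C1" "r C1 \<in> C2" using r by auto
    moreover have "C1 \<in> components (V - S) kneser_adj" "C2 \<in> components (V - S) kneser_adj" using c sub by auto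
    ultimately show "C1 = C2" using comp_disj by blast
  qed
  then show "card (r ` \<A>) = card \<A>" by (simp add: card_image)
  show "r ` \<A> \<subseteq> {X. X \<subseteq> {1..n} - Y \<and> card X = k}"
  proof
    fix X assume "X \<in> r ` \<A>"
    then obtain C where C: "C \<in> \<A>" "X = r C" by auto
    then have "X \<in> V" using comp_sub[of C "V - S"] sub r by auto
    then show "X \<in> {X. X \<subseteq> {1..n} - Y \<and> card X = k}" using r C unfolding V_def kneser_vertices_def by auto
  qed
  show "\<forall>X\<in>r ` \<A>. \<forall>X'\<in>r ` \<A>. X \<inter> X' \<noteq> {}"
  proof (intro ballI)
    fix X X' assume "X \<in> r ` \<A>" "X' \<in> r ` \<A>"
    then obtain C C' where C: "C \<in> \<A>" "X = r C" and C': "C' \<in> \<A>" "X' = r C'" by auto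
    have XW: "X \<in> V - S" "X' \<in> V - S" using comp_sub[of C "V - S"] comp_sub[of C' "V - S"] sub r C C' by auto
    show "X \<inter> X' \<noteq> {}"
    proof (cases "C = C'")
      case True
      then have "X = X'" using C C' by simp
      moreover have "card X = k" using XW unfolding V_def kneser_vertices_def by auto
      ultimately show ?thesis using k1 by auto
    next
      case False
      show ?thesis
      proof
        assume "X \<inter> X' = {}"
        then have "X' \<in> C" using comp_closed[of C "V - S" X X'] sub C r XW unfolding kneser_adj_def by auto
        then have "C = C'" using comp_disj[of C "V - S" C' X'] sub C C' r by auto
        then show False using False by simp
      qed
    qed
  qed
qed

lemma aY_bound:
  fixes n k :: nat
  defines "V \<equiv> kneser_vertices n k"
  assumes k1: "1 \<le> k" and nk: "3*k \<le> n" and S: "S \<subseteq> V" and Y: "Y \<in> S"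
  shows "card {C\<in>components (V - S) kneser_adj. Y \<in> gnb V kneser_adj C} * (n - k) \<le> k * ((n - k) choose k)"
proof -
  let ?A = "{C\<in>components (V - S) kneser_adj. Y \<in> gnb V kneser_adj C}"
  define r where "r C = (SOME X. X \<in> C \<and> X \<inter> Y = {})" for C
  have r: "\<forall>C\<in>?A. r C \<in> C \<and> r C \<inter> Y = {}"
  proof
    fix C assume "C \<in> ?A"
    then have "\<exists>X. X \<in> C \<and> X \<inter> Y = {}" unfolding gnb_def kneser_adj_def by auto
    then show "r C \<in> C \<and> r C \<inter> Y = {}" unfolding r_def by (rule someI_ex)
  qed
  note rf = rep_family[where n=n and k=k and S=S and \<A>="?A" and r=r and Y=Y, folded V_def, OF k1 S _ r]
  have YV: "Y \<subseteq> {1..n}" "card Y = k" using Y S unfolding V_def kneser_vertices_def by auto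
  have cG: "card ({1..n} - Y) = n - k" using YV by (simp add: card_Diff_subset finite_subset)
  have "card (r ` ?A) * (n - k) \<le> k * ((n - k) choose k)"
    by (rule ekr_weak[of "{1..n} - Y"]) (use cG k1 nk rf in auto)
  then show ?thesis using rf by simp
qed

lemma aY_strict:
  fixes n k :: nat
  defines "V \<equiv> kneser_vertices n k"
  assumes k2: "2 \<le> k" and nk: "5*k \<le> n" and S: "S \<subseteq> V" and Y: "Y \<in> S"
    and C0: "C0 \<in> components (V - S) kneser_adj" and AB: "A \<in> C0" "B \<in> C0" "A \<inter> B = {}"
    and YAB: "Y \<inter> A = {}" "Y \<inter> B = {}"
  shows "card {C\<in>components (V - S) kneser_adj. Y \<in> gnb V kneser_adj C} * (n - k) < k * ((n - k) choose k)"
proof -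
  let ?C = "components (V - S) kneser_adj"
  let ?A = "{C\<in>?C. Y \<in> gnb V kneser_adj C}"
  have k1: "1 \<le> k" using k2 by simp
  define r where "r C = (if C = C0 then A else (SOME X. X \<in> C \<and> X \<inter> Y = {}))" for C
  have r: "\<forall>C\<in>?A. r C \<in> C \<and> r C \<inter> Y = {}"
  proof
    fix C assume "C \<in> ?A"
    then have "\<exists>X. X \<in> C \<and> X \<inter> Y = {}" unfolding gnb_def kneser_adj_def by auto
    show "r C \<in> C \<and> r C \<inter> Y = {}"
    proof (cases "C = C0")
      case True then show ?thesis unfolding r_def using AB YAB by (auto simp: Int_commute)
    next
      case False then show ?thesis unfolding r_def using someI_ex[OF \<open>\<exists>X. X \<in> C \<and> X \<inter> Y = {}\<close>] by simp
    qed
  qed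
  note rf = rep_family[where n=n and k=k and S=S and \<A>="?A" and r=r and Y=Y, folded V_def, OF k1 S _ r]
  have W: "A \<in> V - S" "B \<in> V - S" using comp_sub[OF C0] AB by auto
  have YV: "Y \<subseteq> {1..n}" "card Y = k" "Y \<in> V" using Y S unfolding V_def kneser_vertices_def by auto
  have ABv: "A \<subseteq> {1..n}" "card A = k" "B \<subseteq> {1..n}" "card B = k" using W unfolding V_def kneser_vertices_def by auto
  have cG: "card ({1..n} - Y) = n - k" using YV by (simp add: card_Diff_subset finite_subset)
  have C0A: "C0 \<in> ?A"
  proof -
    have "Y \<notin> C0" using comp_sub[OF C0] Y by auto
    then show ?thesis using C0 YV AB YAB unfolding gnb_def kneser_adj_def by (auto simp: Int_commute)
  qed
  have AF: "A \<in> r ` ?A" using C0A unfolding r_def by force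
  have FB: "\<forall>X\<in>r ` ?A. X \<noteq> A \<longrightarrow> X \<inter> A \<noteq> {} \<and> X \<inter> B \<noteq> {}"
  proof (intro ballI impI)
    fix X assume X: "X \<in> r ` ?A" "X \<noteq> A"
    then obtain C where C: "C \<in> ?A" "X = r C" by auto
    then have "C \<noteq> C0" using X unfolding r_def by auto
    have XC: "X \<in> C" using r C by auto
    have XW: "X \<in> V - S" using comp_sub[of C "V - S"] C XC by auto
    have "X \<inter> Z \<noteq> {}" if "Z \<in> C0" for Z
    proof
      assume "X \<inter> Z = {}"
      then have "Z \<in> C" using comp_closed[of C "V - S" X Z] C XC that comp_sub[OF C0] unfolding kneser_adj_def by auto
      then have "C = C0" using comp_disj[of C "V - S" C0 Z] C C0 that by auto
      then show False using \<open>C \<noteq> C0\<close> by simp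
    qed
    then show "X \<inter> A \<noteq> {} \<and> X \<inter> B \<noteq> {}" using AB by auto
  qed
  have "\<exists>xs\<in>permutations_of_set ({1..n} - Y). card {j. j < n - k \<and> arc k xs j \<in> r ` ?A} < k"
    by (rule strict_list[of _ "n - k" k A B]) (use cG nk k2 ABv YAB AB AF FB in auto)
  then have "card (r ` ?A) * (n - k) < k * ((n - k) choose k)"
    using ekr_main[of "{1..n} - Y" "n - k" k "r ` ?A"] cG k1 nk rf by auto
  then show ?thesis using rf by simp
qed

lemma main_bound:
  fixes n k :: nat
  defines "V \<equiv> kneser_vertices n k"
  assumes k2: "2 \<le> k" and nk: "5*k \<le> n" and S: "S \<subseteq> V"
    and c2: "2 \<le> num_components (V - S) kneser_adj"
  shows "(n - k) * num_components (V - S) kneser_adj \<le> k * card S"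
    "(n - k) * num_components (V - S) kneser_adj = k * card S \<Longrightarrow>
       \<exists>I. maximum_independent_set V kneser_adj I \<and> S = V - I"
proof -
  let ?C = "components (V - S) kneser_adj"
  define c where "c = card ?C"
  define m where "m = n - k"
  define d where "d = m choose k"
  define a where "a Y = card {C\<in>?C. Y \<in> gnb V kneser_adj C}" for Y
  have k1: "1 \<le> k" using k2 by simp
  have cc: "num_components (V - S) kneser_adj = c" unfolding c_def num_components_def by simp
  have fV: "finite V" unfolding V_def by (rule kv_finite)
  have fS: "finite S" using S fV finite_subset by auto
  have fC: "finite ?C" using comp_finite fV by simp
  have d0: "0 < d" unfolding d_def m_def using nk by simp
  have c0: "0 < c" using c2 cc by simp
  have frag: "gfrag V kneser_adj C" if C: "C \<in> ?C" for C
  proof -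
    have "?C - {C} \<noteq> {}"
    proof
      assume "?C - {C} = {}"
      then have "?C \<subseteq> {C}" by auto
      then have "card ?C \<le> card {C}" by (intro card_mono) auto
      then have "card ?C \<le> 1" by simp
      then show False using c2 unfolding num_components_def by simp
    qed
    then obtain C' where C': "C' \<in> ?C" "C' \<noteq> C" by auto
    obtain x where x: "x \<in> C'" using comp_ne[OF C'(1)] by auto
    have xW: "x \<in> V - S" using comp_sub[OF C'(1)] x by auto
    have "x \<notin> C" using comp_disj[OF C C'(1) _ x] C'(2) by auto
    moreover have "x \<notin> gnb V kneser_adj C"
    proof
      assume "x \<in> gnb V kneser_adj C"
      then obtain X where "X \<in> C" "kneser_adj X x" unfolding gnb_def by auto
      then have "x \<in> C" using comp_closed[OF C _ xW] by auto
      then show False using \<open>x \<notin> C\<close> by simp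
    qed
    ultimately have "x \<in> gbar V kneser_adj C" using xW unfolding gbar_def by auto
    then show ?thesis using comp_sub[OF C] comp_ne[OF C] unfolding gfrag_def by auto
  qed
  have nbd: "d \<le> card (gnb V kneser_adj C)" if "C \<in> ?C" for C
    using kneser_kappa[where n=n and k=k and C=C, folded V_def] frag[OF that] k1 nk unfolding d_def m_def by simp
  have sumge: "c * d \<le> (\<Sum>C\<in>?C. card (gnb V kneser_adj C))"
    using sum_mono[of ?C "\<lambda>_. d" "\<lambda>C. card (gnb V kneser_adj C)"] nbd unfolding c_def by simp
  have sumeq: "(\<Sum>C\<in>?C. card (gnb V kneser_adj C)) = (\<Sum>Y\<in>S. a Y)"
    unfolding a_def by (rule sum_nb_eq[OF S fV])
  have aYm: "a Y * m \<le> k * d" if "Y \<in> S" for Y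
    unfolding a_def m_def d_def using aY_bound[where n=n and k=k and S=S and Y=Y, folded V_def] that k1 nk S by simp
  have key: "m * c * d \<le> m * (\<Sum>Y\<in>S. a Y)" using sumge sumeq by simp
  have key2: "m * (\<Sum>Y\<in>S. a Y) = (\<Sum>Y\<in>S. a Y * m)" by (simp add: sum_distrib_left mult.commute)
  have key3: "(\<Sum>Y\<in>S. a Y * m) \<le> card S * (k * d)"
    using sum_mono[of S "\<lambda>Y. a Y * m" "\<lambda>_. k * d"] aYm by simp
  have part1: "m * c \<le> k * card S"
  proof -
    have "m * c * d \<le> card S * (k * d)" using key key2 key3 by linarith
    also have "card S * (k * d) = (k * card S) * d" by simp
    finally have "(m * c) * d \<le> (k * card S) * d" .
    then show ?thesis using d0 mult_le_cancel2 by blast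
  qed
  then show "(n - k) * num_components (V - S) kneser_adj \<le> k * card S" using cc m_def by simp
  have strict: "m * c < k * card S" if Y0: "Y0 \<in> S" "a Y0 * m < k * d" for Y0
  proof -
    have "(\<Sum>Y\<in>S. a Y * m) < (\<Sum>Y\<in>S. k * d)"
      by (rule sum_strict_mono_ex1) (use fS aYm Y0 in auto)
    also have "(\<Sum>Y\<in>S. k * d) = (k * card S) * d" by simp
    finally have "m * c * d < (k * card S) * d" using key key2 by linarith
    then show ?thesis using d0 mult_less_cancel2 by blast
  qed
  assume eq: "(n - k) * num_components (V - S) kneser_adj = k * card S"
  then have eq': "m * c = k * card S" using cc m_def by simp
  show "\<exists>I. maximum_independent_set V kneser_adj I \<and> S = V - I"
  proof (cases "\<forall>x\<in>V - S. \<forall>y\<in>V - S. \<not> kneser_adj x y")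
    case True
    let ?W = "V - S"
    have cW: "c = card ?W" using comp_indep[OF True] cc by simp
    have cV: "card V = n choose k" unfolding V_def by (rule kv_card)
    have cS0: "card ?W = card V - card S" using S fS by (simp add: card_Diff_subset)
    have "card S \<le> card V" using S fV by (simp add: card_mono)
    then have cS: "card S = card V - card ?W" using cS0 by simp
    have cWV: "card ?W \<le> card V" using fV by (simp add: card_mono)
    have nc: "n * c = k * (n choose k)"
    proof -
      have "m * c + k * c = k * card S + k * c" using eq' by simp
      also have "\<dots> = k * (card S + card ?W)" using cW by (simp add: algebra_simps)
      also have "card S + card ?W = card V" using cS cWV by simp
      finally have "(m + k) * c = k * card V" by (simp add: algebra_simps)
      then show ?thesis using cV nk unfolding m_def by simp
    qed
    have indep: "independent_set V kneser_adj ?W" unfolding independent_set_def using True by auto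
    have "card J \<le> card ?W" if J: "independent_set V kneser_adj J" for J
    proof -
      have JV: "J \<subseteq> V" and Ji: "\<forall>x\<in>J. \<forall>y\<in>J. \<not> kneser_adj x y" using J unfolding independent_set_def by auto
      have "card J * n \<le> k * (n choose k)"
      proof (rule ekr_weak[of "{1..n}" n k J])
        show "J \<subseteq> {X. X \<subseteq> {1..n} \<and> card X = k}" using JV unfolding V_def kneser_vertices_def by auto
        show "\<forall>X\<in>J. \<forall>Y\<in>J. X \<inter> Y \<noteq> {}" using Ji unfolding kneser_adj_def by auto
      qed (use k1 nk in auto)
      then have "card J * n \<le> c * n" using nc by (simp add: mult.commute)
      moreover have "0 < n" using nk k2 by simp
      ultimately show ?thesis using cW by simp
    qed
    then have "maximum_independent_set V kneser_adj ?W" unfolding maximum_independent_set_def using indep by auto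
    moreover have "S = V - ?W" using S by auto
    ultimately show ?thesis by blast
  next
    case False
    then obtain A B where AB: "A \<in> V - S" "B \<in> V - S" "kneser_adj A B" by auto
    obtain C0 where C0: "C0 \<in> ?C" "A \<in> C0" using comp_of[OF AB(1)] by auto
    have BC0: "B \<in> C0" using comp_closed[OF C0(1) C0(2) AB(2,3)] .
    have "?C - {C0} \<noteq> {}"
    proof
      assume "?C - {C0} = {}"
      then have "?C \<subseteq> {C0}" by auto
      then have "card ?C \<le> card {C0}" by (intro card_mono) auto
      then have "card ?C \<le> 1" by simp
      then show False using c2 unfolding num_components_def by simp
    qed
    then obtain C1 where C1: "C1 \<in> ?C" "C1 \<noteq> C0" by auto
    obtain D where D: "D \<in> C1" using comp_ne[OF C1(1)] by auto
    have DW: "D \<in> V - S" using comp_sub[OF C1(1)] D by auto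
    have sv: "A \<subseteq> {1..n}" "card A = k" "B \<subseteq> {1..n}" "card B = k" "D \<subseteq> {1..n}" "card D = k"
      using AB DW unfolding V_def kneser_vertices_def by auto
    have "A \<union> B \<union> D \<subseteq> {1..n}" using sv by auto
    then have fABD: "finite (A \<union> B \<union> D)" using finite_subset by blast
    have "card (A \<union> B \<union> D) \<le> 3 * k" using sv card_Un_le[of "A \<union> B" D] card_Un_le[of A B] by simp
    moreover have "A \<union> B \<union> D \<subseteq> {1..n}" using sv by auto
    ultimately have "k \<le> card ({1..n} - (A \<union> B \<union> D))" using nk fABD by (simp add: card_Diff_subset)
    then obtain Y where Y: "Y \<subseteq> {1..n} - (A \<union> B \<union> D)" "card Y = k" by (rule obtain_subset_with_card_n)
    have YV: "Y \<in> V" using Y unfolding V_def kneser_vertices_def by auto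
    have YS: "Y \<in> S"
    proof (rule ccontr)
      assume "Y \<notin> S"
      then have YW: "Y \<in> V - S" using YV by simp
      have "kneser_adj A Y" using Y unfolding kneser_adj_def by auto
      then have "Y \<in> C0" using comp_closed[OF C0 YW] by simp
      moreover have "kneser_adj Y D" using Y unfolding kneser_adj_def by auto
      ultimately have "D \<in> C0" using comp_closed[OF C0(1) _ DW] by simp
      then show False using comp_disj[OF C0(1) C1(1) _ D] C1(2) by auto
    qed
    have ABd: "A \<inter> B = {}" using AB(3) unfolding kneser_adj_def .
    have YA: "Y \<inter> A = {}" "Y \<inter> B = {}" using Y by auto
    have "a Y * m < k * d"
      unfolding a_def m_def d_def
      using aY_strict[where n=n and k=k, folded V_def, OF k2 nk S YS C0(1) C0(2) BC0 ABd YA] .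
    then have "m * c < k * card S" using strict YS by blast
    then show ?thesis using eq' by simp
  qed
qed

lemma star_card:
  fixes n k :: nat
  assumes k1: "1 \<le> k" and n1: "1 \<le> n"
  shows "card {X\<in>kneser_vertices n k. 1 \<in> X} = (n - 1) choose (k - 1)"
proof -
  let ?T = "{Z. Z \<subseteq> {2..n} \<and> card Z = k - 1}"
  have e: "{X\<in>kneser_vertices n k. 1 \<in> X} = insert 1 ` ?T"
  proof
    show "{X\<in>kneser_vertices n k. 1 \<in> X} \<subseteq> insert 1 ` ?T"
    proof
      fix X assume X: "X \<in> {X\<in>kneser_vertices n k. 1 \<in> X}"
      then have X': "X \<subseteq> {1..n}" "card X = k" "1 \<in> X" unfolding kneser_vertices_def by auto
      have "X - {1} \<in> ?T" using X' by (auto simp: card_Diff_singleton)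
      moreover have "X = insert 1 (X - {1})" using X' by auto
      ultimately show "X \<in> insert 1 ` ?T" by blast
    qed
    show "insert 1 ` ?T \<subseteq> {X\<in>kneser_vertices n k. 1 \<in> X}"
    proof
      fix X assume "X \<in> insert 1 ` ?T"
      then obtain Z where Z: "Z \<subseteq> {2..n}" "card Z = k - 1" "X = insert 1 Z" by auto
      have fZ: "finite Z" using Z finite_subset by auto
      have "1 \<notin> Z" using Z by auto
      then have "card X = k" using Z fZ k1 by simp
      moreover have "X \<subseteq> {1..n}" using Z n1 by auto
      ultimately show "X \<in> {X\<in>kneser_vertices n k. 1 \<in> X}" using Z unfolding kneser_vertices_def by auto
    qed
  qed
  have inj: "inj_on (insert 1) ?T"
  proof (rule inj_onI)
    fix Z1 Z2 assume "Z1 \<in> ?T" "Z2 \<in> ?T" "insert (1::nat) Z1 = insert 1 Z2"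
    then show "Z1 = Z2" by (metis atLeastAtMost_iff insert_ident mem_Collect_eq one_less_numeral_iff
          semiring_norm(76) subsetD not_less)
  qed
  have "card ?T = (n - 1) choose (k - 1)" using n_subsets[of "{2..n}" "k - 1"] by simp
  then show ?thesis unfolding e using card_image[OF inj] by simp
qed

lemma n_bound:
  fixes n k :: nat
  assumes "k \<ge> 5"
    and "real n \<ge> 2 / ln 2 * (real k)^2 + (2 - 3 / ln 2) * real k + 1 / ln 2"
  shows "5 * k \<le> n"
proof -
  define L where "L = ln (2::real)"
  have L0: "0 < L" and L1: "L < 1" unfolding L_def using ln_2_less_1 by auto
  define x where "x = 2 * (real k)^2 - 3 * real k + 1"
  have kk: "real k \<ge> 5" using assms(1) by simp
  have xe: "x = (2 * real k - 1) * (real k - 1)" unfolding x_def by (simp add: power2_eq_square algebra_simps)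
  have x0: "0 \<le> x" unfolding xe using kk by (intro mult_nonneg_nonneg) auto
  have e: "2 / L * (real k)^2 + (2 - 3 / L) * real k + 1 / L = x / L + 2 * real k"
    unfolding x_def using L0 by (simp add: field_simps)
  have "x * L \<le> x" using x0 L1 by (simp add: mult_left_le)
  then have "x \<le> x / L" using L0 by (simp add: le_divide_eq)
  then have "real n \<ge> x + 2 * real k" using assms(2) e unfolding L_def by linarith
  moreover have "x + 2 * real k \<ge> 5 * real k"
  proof -
    have "0 \<le> real k * (real k - 3)" using kk by (intro mult_nonneg_nonneg) auto
    then show ?thesis unfolding x_def by (simp add: power2_eq_square algebra_simps)
  qed
  ultimately have "real (5 * k) \<le> real n" by simp
  then show ?thesis by linarith
qed

theorem theorem1p3:
  fixes n k :: nat
  assumes "k \<ge> 5"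
    and "real n \<ge> 2 / ln 2 * (real k)^2 + (2 - 3 / ln 2) * real k + 1 / ln 2"
  shows "toughness (kneser_vertices n k) kneser_adj = real n / real k - 1
    \<and> (\<forall>S. vertex_cut (kneser_vertices n k) kneser_adj S \<and>
           toughness (kneser_vertices n k) kneser_adj
             = real (card S) / real (num_components (kneser_vertices n k - S) kneser_adj)
         \<longrightarrow> (\<exists>I. maximum_independent_set (kneser_vertices n k) kneser_adj I
                   \<and> S = kneser_vertices n k - I))"
proof -
  have nk: "5 * k \<le> n" using n_bound[OF assms] .
  have k2: "2 \<le> k" using assms(1) by simp
  define V where "V = kneser_vertices n k"
  define Q where "Q = {real (card S) / real (num_components (V - S) kneser_adj) | S. vertex_cut V kneser_adj S}"
  have kpos: "real k > 0" using k2 by simp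
  have lower: "real n / real k - 1 \<le> real (card S) / real (num_components (V - S) kneser_adj)"
    if S: "vertex_cut V kneser_adj S" for S
  proof -
    have SV: "S \<subseteq> V" and c2: "2 \<le> num_components (V - S) kneser_adj"
      using S unfolding vertex_cut_def by auto
    have b: "(n - k) * num_components (V - S) kneser_adj \<le> k * card S"
      using main_bound(1)[where n=n and k=k and S=S, folded V_def, OF k2 nk SV c2] .
    then have "real ((n - k) * num_components (V - S) kneser_adj) \<le> real (k * card S)"
      by (simp only: of_nat_le_iff)
    then have "(real n - real k) * real (num_components (V - S) kneser_adj) \<le> real k * real (card S)"
      using nk by (simp add: of_nat_diff)
    moreover have "real (num_components (V - S) kneser_adj) > 0" using c2 by simp
    ultimately show ?thesis using kpos by (simp add: field_simps)
  qed
  define I0 where "I0 = {X\<in>V. 1 \<in> X}"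
  define S0 where "S0 = V - I0"
  have I0V: "I0 \<subseteq> V" unfolding I0_def by auto
  have W0: "V - S0 = I0" unfolding S0_def using I0V by auto
  have ind0: "\<forall>x\<in>I0. \<forall>y\<in>I0. \<not> kneser_adj x y" unfolding I0_def kneser_adj_def by auto
  have cI0: "card I0 = (n - 1) choose (k - 1)" unfolding I0_def V_def using star_card[of k n] k2 nk by simp
  have nc0: "num_components (V - S0) kneser_adj = card I0" using comp_indep[OF ind0] W0 by simp
  have I0ge2: "2 \<le> card I0"
  proof -
    define X1 where "X1 = {1..k}"
    define X2 where "X2 = insert (k+1) {1..k-1}"
    have "X1 \<in> I0" unfolding X1_def I0_def V_def kneser_vertices_def using k2 nk by auto
    moreover have "X2 \<in> I0" unfolding X2_def I0_def V_def kneser_vertices_def using k2 nk by auto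
    moreover have "X1 \<noteq> X2"
    proof
      assume "X1 = X2"
      moreover have "k + 1 \<in> X2" unfolding X2_def by simp
      moreover have "k + 1 \<notin> X1" unfolding X1_def by simp
      ultimately show False by simp
    qed
    moreover have "finite I0" using I0V kv_finite[of n k] finite_subset unfolding V_def by blast
    ultimately have "card {X1, X2} \<le> card I0" by (intro card_mono) auto
    then show ?thesis using \<open>X1 \<noteq> X2\<close> by simp
  qed
  have cut0: "vertex_cut V kneser_adj S0" unfolding vertex_cut_def S0_def using nc0 W0 I0ge2 unfolding S0_def by auto
  have cV: "card V = n choose k" unfolding V_def by (rule kv_card)
  have fV: "finite V" unfolding V_def by (rule kv_finite)
  have cS0: "card S0 = (n choose k) - card I0" unfolding S0_def using I0V fV cV
    by (simp add: card_Diff_subset finite_subset)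
  have id: "k * (n choose k) = n * card I0" using times_binomial_minus1_eq[of k n] k2 cI0 by simp
  have le: "card I0 \<le> n choose k" using card_mono[OF fV I0V] cV by simp
  have r0: "real (card S0) / real (num_components (V - S0) kneser_adj) = real n / real k - 1"
  proof -
    have h: "real k * real (n choose k) = real n * real (card I0)" using id by (metis of_nat_mult)
    have e2: "real (n choose k) = real n * real (card I0) / real k" using h kpos by (simp add: field_simps)
    have e1: "real (card S0) = real (n choose k) - real (card I0)" using cS0 le by (simp add: of_nat_diff)
    have "real (card I0) > 0" using I0ge2 by simp
    then show ?thesis unfolding nc0 e1 e2 using kpos by (simp add: field_simps)
  qed
  have Q0: "real n / real k - 1 \<in> Q" unfolding Q_def using cut0 r0 by (metis (mono_tags, lifting) mem_Collect_eq)
  have finQ: "finite Q"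
  proof -
    have "Q \<subseteq> (\<lambda>S. real (card S) / real (num_components (V - S) kneser_adj)) ` Pow V"
      unfolding Q_def vertex_cut_def by auto
    then show ?thesis using fV finite_subset by blast
  qed
  have tough: "toughness V kneser_adj = real n / real k - 1"
    unfolding toughness_def Q_def[symmetric]
  proof (rule Min_eqI[OF finQ _ Q0])
    fix q assume "q \<in> Q"
    then obtain S where "vertex_cut V kneser_adj S" "q = real (card S) / real (num_components (V - S) kneser_adj)"
      unfolding Q_def by auto
    then show "real n / real k - 1 \<le> q" using lower by simp
  qed
  have more: "\<exists>I. maximum_independent_set V kneser_adj I \<and> S = V - I"
    if S: "vertex_cut V kneser_adj S"
      and eq: "toughness V kneser_adj = real (card S) / real (num_components (V - S) kneser_adj)" for S
  proof -
    have SV: "S \<subseteq> V" and c2: "2 \<le> num_components (V - S) kneser_adj"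
      using S unfolding vertex_cut_def by auto
    have cpos: "real (num_components (V - S) kneser_adj) > 0" using c2 by simp
    have "real (card S) / real (num_components (V - S) kneser_adj) = real n / real k - 1"
      using eq tough by simp
    then have "real k * real (card S) = (real n - real k) * real (num_components (V - S) kneser_adj)"
      using cpos kpos by (simp add: field_simps)
    then have "real (k * card S) = real ((n - k) * num_components (V - S) kneser_adj)"
      using nk by (simp add: of_nat_diff)
    then have "(n - k) * num_components (V - S) kneser_adj = k * card S" by (simp only: of_nat_eq_iff)
    then show ?thesis using main_bound(2)[where n=n and k=k and S=S, folded V_def, OF k2 nk SV c2] by blast
  qed
  show ?thesis using tough more unfolding V_def by blast
qed

end
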